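(* Consider the discrete setting described in the context, and assume that the number $N$ of spatial cells is odd. Let $\Delta t_{\max}>0$ be arbitrary. Then there exist constants $C\ge1$ and $\kappa>0$, independent of the discretization parameters (of $N$, $L$, $\Delta x$, $\Delta v$, and of $\Delta t\le\Delta t_{\max}$), such that for all $\Delta t\le\Delta t_{\max}$ and all initial data $F^0=(f^0_{ij},g^0_{ij})_{i\in\mathcal I,j\in\mathcal J}$ with $\sum_{i,j}\Delta x\,\Delta v\,(f^0_{ij}-g^0_{ij})=0$, the solution $F^n=(f^n_{ij},g^n_{ij})$ of the linearized scheme satisfies for all $n\ge0$ $$\|F^{n+1}\|_\Delta\le C\,\|F^0\|_\Delta\,e^{-\kappa t^n}.$$
   Context: Space mesh: the torus $\mathbb T$ is split into $N$ uniform cells of length $\Delta x$, indexed by $i\in\mathcal I=\mathbb Z/N\mathbb Z$ (periodic). Velocity mesh: $v^*>0$, integer $L\ge1$, $\Delta v=v^*/L$, cells $j\in\mathcal J=\{-L+1,\dots,L\}$ with midpoints $v_j=(j-\tfrac12)\Delta v$. Time step $\Delta t>0$, $t^n=n\Delta t$; $\lambda=\Delta x/(2\Delta t)$ is a fixed positive constant. Fixed $\rho_\infty^*>0$. For $k=1,2$: $\chi_{k,j}>0$, $\chi_{k,j}=\chi_{k,1-j}$, $\sum_j\Delta v\chi_{k,j}=1$, $0<\underline D_k\le\sum_j\Delta v\,v_j^2\chi_{k,j}\le\overline D_k$, $\sum_j\Delta v\,v_j^4\chi_{k,j}\le\overline Q_k$, where $\underline D_k,\overline D_k,\overline Q_k$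 are constants independent of the discretization. Densities $\rho_{f,i}=\sum_j\Delta vf_{ij}$, $\rho_{g,i}=\sum_j\Delta vg_{ij}$. Linearized scheme ($n\ge0$): $\frac{f^{n+1}_{ij}-f^n_{ij}}{\Delta t}+\frac{1}{\Delta x\Delta v}(\mathcal F^{n+1}_{i+\frac12,j}-\mathcal F^{n+1}_{i-\frac12,j})=-\rho_\infty^*\chi_{1,j}\rho^{n+1}_{g,i}-(\rho_\infty^* )^{-1}f^{n+1}_{ij}$, $\frac{g^{n+1}_{ij}-g^n_{ij}}{\Delta t}+\frac{1}{\Delta x\Delta v}(\mathcal G^{n+1}_{i+\frac12,j}-\mathcal G^{n+1}_{i-\frac12,j})=-(\rho_\infty^* )^{-1}\chi_{2,j}\rho^{n+1}_{f,i}-\rho_\infty^*g^{n+1}_{ij}$, with Lax–Friedrichs fluxes $\mathcal F^{n+1}_{i+\frac12,j}=\Delta v\frac{v_j}{2}(f^{n+1}_{i+1,j}+f^{n+1}_{ij})-\Delta v\lambda(f^{n+1}_{i+1,j}-f^{n+1}_{ij})$ and $\mathcal G$ likewise with $g$. Norm: $\|F\|_\Delta^2=\sum_{i,j}\Delta x\Delta v\big(\frac{f_{ij}^2}{\chi_{1,j}\rho_\infty^*}+\frac{g_{ij}^2\rho_\infty^*}{\chi_{2,j}}\big)$. *)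

theory Defs
  imports Complex_Main
begin

definition Jset :: "nat \<Rightarrow> int set" where
  "Jset L = {1 - int L .. int L}"

definition vel :: "real \<Rightarrow> int \<Rightarrow> real" where
  "vel dv j = (real_of_int j - 1/2) * dv"

text \<open>Periodic neighbours on I = Z/NZ, represented by {0..<N}.\<close>
definition nxt :: "nat \<Rightarrow> nat \<Rightarrow> nat" where
  "nxt N i = (i + 1) mod N"
definition prv :: "nat \<Rightarrow> nat \<Rightarrow> nat" where
  "prv N i = (i + N - 1) mod N"

text \<open>Lax--Friedrichs flux at interface i+1/2, with a = value in cell i and
  b = value in cell i+1.\<close>
definition LF_flux :: "real \<Rightarrow> real \<Rightarrow> real \<Rightarrow> real \<Rightarrow> real \<Rightarrow> real" where
  "LF_flux dv lam v a b = dv * (v / 2) * (b + a) - dv * lam * (b - a)"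

definition dens :: "nat \<Rightarrow> real \<Rightarrow> (nat \<Rightarrow> int \<Rightarrow> real) \<Rightarrow> nat \<Rightarrow> real" where
  "dens L dv h i = (\<Sum>j\<in>Jset L. dv * h i j)"

definition chi_ok :: "nat \<Rightarrow> real \<Rightarrow> real \<Rightarrow> real \<Rightarrow> real \<Rightarrow> (int \<Rightarrow> real) \<Rightarrow> bool" where
  "chi_ok L dv Dlo Dhi Q chi \<longleftrightarrow>
     (\<forall>j\<in>Jset L. chi j > 0 \<and> chi j = chi (1 - j)) \<and>
     (\<Sum>j\<in>Jset L. dv * chi j) = 1 \<and>
     Dlo \<le> (\<Sum>j\<in>Jset L. dv * (vel dv j)^2 * chi j) \<and>
     (\<Sum>j\<in>Jset L. dv * (vel dv j)^2 * chi j) \<le> Dhi \<and>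
     (\<Sum>j\<in>Jset L. dv * (vel dv j)^4 * chi j) \<le> Q"

definition scheme ::
  "nat \<Rightarrow> nat \<Rightarrow> real \<Rightarrow> real \<Rightarrow> real \<Rightarrow> real \<Rightarrow> real \<Rightarrow> (int \<Rightarrow> real) \<Rightarrow> (int \<Rightarrow> real)
   \<Rightarrow> (nat \<Rightarrow> nat \<Rightarrow> int \<Rightarrow> real) \<Rightarrow> (nat \<Rightarrow> nat \<Rightarrow> int \<Rightarrow> real) \<Rightarrow> bool" where
  "scheme N L dx dv dt lam rho chi1 chi2 f g \<longleftrightarrow>
     (\<forall>n. \<forall>i<N. \<forall>j\<in>Jset L.
        (f (Suc n) i j - f n i j) / dt
          + (LF_flux dv lam (vel dv j) (f (Suc n) i j) (f (Suc n) (nxt N i) j)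
             - LF_flux dv lam (vel dv j) (f (Suc n) (prv N i) j) (f (Suc n) i j)) / (dx * dv)
        = - rho * chi1 j * dens L dv (g (Suc n)) i - (1 / rho) * f (Suc n) i j
      \<and>
        (g (Suc n) i j - g n i j) / dt
          + (LF_flux dv lam (vel dv j) (g (Suc n) i j) (g (Suc n) (nxt N i) j)
             - LF_flux dv lam (vel dv j) (g (Suc n) (prv N i) j) (g (Suc n) i j)) / (dx * dv)
        = - (1 / rho) * chi2 j * dens L dv (f (Suc n)) i - rho * g (Suc n) i j)"

definition normD ::
  "nat \<Rightarrow> nat \<Rightarrow> real \<Rightarrow> real \<Rightarrow> real \<Rightarrow> (int \<Rightarrow> real) \<Rightarrow> (int \<Rightarrow> real)
   \<Rightarrow> (nat \<Rightarrow> int \<Rightarrow> real) \<Rightarrow> (nat \<Rightarrow> int \<Rightarrow> real) \<Rightarrow> real" where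
  "normD N L dx dv rho chi1 chi2 f g =
     sqrt (\<Sum>i<N. \<Sum>j\<in>Jset L. dx * dv *
        ((f i j)^2 / (chi1 j * rho) + (g i j)^2 * rho / chi2 j))"

end

theory Submission
  imports Defs
begin


lemma nxt_lt: "0 < N \<Longrightarrow> nxt N i < N" by (simp add: nxt_def)
lemma prv_lt: "0 < N \<Longrightarrow> prv N i < N" by (simp add: prv_def)
lemma prv_nxt: "i < N \<Longrightarrow> prv N (nxt N i) = i"
proof -
  assume i: "i < N"
  show ?thesis
  proof (cases "i + 1 = N")
    case True then show ?thesis by (simp add: nxt_def prv_def)
  next
    case False
    then have "(i+1) mod N = i + 1" using i by simp
    then show ?thesis unfolding nxt_def prv_def using i by simp
  qed
qed
lemma nxt_prv: "i < N \<Longrightarrow> nxt N (prv N i) = i"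
proof -
  assume i: "i < N"
  show ?thesis
  proof (cases "i = 0")
    case True then show ?thesis using i by (simp add: nxt_def prv_def)
  next
    case False
    then have "(i + N - 1) mod N = i - 1" using i
      by (metis Nat.add_diff_assoc2 One_nat_def Suc_leI add.commute diff_less gr_zeroI less_imp_diff_less mod_add_self1 mod_less zero_less_one)
    then show ?thesis unfolding nxt_def prv_def using i False by simp
  qed
qed

lemma sum_nxt: "(\<Sum>i<N. \<phi> (nxt N i)) = (\<Sum>i<N. (\<phi> i :: real))"
proof (cases "N = 0")
  case True then show ?thesis by simp
next
  case False
  show ?thesis
    by (rule sum.reindex_bij_witness[where i="prv N" and j="nxt N"])
       (use False in \<open>auto simp: prv_nxt nxt_prv nxt_lt prv_lt\<close>)
qed

lemma sum_prv: "(\<Sum>i<N. \<phi> (prv N i)) = (\<Sum>i<N. (\<phi> i :: real))"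
proof (cases "N = 0")
  case True then show ?thesis by simp
next
  case False
  show ?thesis
    by (rule sum.reindex_bij_witness[where i="nxt N" and j="prv N"])
       (use False in \<open>auto simp: prv_nxt nxt_prv nxt_lt prv_lt\<close>)
qed

lemma sbp_c: "(\<Sum>i<N. a i * (b (nxt N i) - b (prv N i))) = - (\<Sum>i<N. (a (nxt N i) - a (prv N i)) * (b i :: real))"
proof -
  have 1: "(\<Sum>i<N. a i * b (nxt N i)) = (\<Sum>i<N. a (prv N i) * b i)"
  proof -
    have "(\<Sum>i<N. a i * b (nxt N i)) = (\<Sum>i<N. (\<lambda>k. a (prv N k) * b k) (nxt N i))"
      by (rule sum.cong) (auto simp: prv_nxt)
    also have "\<dots> = (\<Sum>i<N. a (prv N i) * b i)" by (rule sum_nxt)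
    finally show ?thesis .
  qed
  have 2: "(\<Sum>i<N. a i * b (prv N i)) = (\<Sum>i<N. a (nxt N i) * b i)"
  proof -
    have "(\<Sum>i<N. a i * b (prv N i)) = (\<Sum>i<N. (\<lambda>k. a (nxt N k) * b k) (prv N i))"
      by (rule sum.cong) (auto simp: nxt_prv)
    also have "\<dots> = (\<Sum>i<N. a (nxt N i) * b i)" by (rule sum_prv)
    finally show ?thesis .
  qed
  show ?thesis using 1 2 by (simp add: algebra_simps sum_subtractf)
qed

lemma sbp_lap: "(\<Sum>i<N. a i * (b (nxt N i) - 2 * b i + b (prv N i))) = - (\<Sum>i<N. (a (nxt N i) - a i) * (b (nxt N i) - (b i :: real)))"
proof -
  have 2: "(\<Sum>i<N. a i * b (prv N i)) = (\<Sum>i<N. a (nxt N i) * b i)"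
  proof -
    have "(\<Sum>i<N. a i * b (prv N i)) = (\<Sum>i<N. (\<lambda>k. a (nxt N k) * b k) (prv N i))"
      by (rule sum.cong) (auto simp: nxt_prv)
    also have "\<dots> = (\<Sum>i<N. a (nxt N i) * b i)" by (rule sum_prv)
    finally show ?thesis .
  qed
  have 3: "(\<Sum>i<N. a (nxt N i) * b (nxt N i)) = (\<Sum>i<N. a i * b i)" by (rule sum_nxt)
  show ?thesis using 2 3 by (simp add: algebra_simps sum_subtractf sum.distrib sum_distrib_left)
qed


lemma dsum_aux:
  fixes P Q X :: "'a \<Rightarrow> real"
  shows "(\<Sum>x\<in>A. \<Sum>y\<in>A. P x * Q y + P y * Q x - 2 * X x * X y) = 2 * (sum P A * sum Q A) - 2 * (sum X A)^2"
proof -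
  have 1: "(\<Sum>x\<in>A. \<Sum>y\<in>A. P x * Q y) = sum P A * sum Q A" by (simp add: sum_product)
  have 2: "(\<Sum>x\<in>A. \<Sum>y\<in>A. P y * Q x) = sum P A * sum Q A" by (subst sum.swap) (simp add: sum_product)
  have 3: "(\<Sum>x\<in>A. \<Sum>y\<in>A. 2 * X x * X y) = 2 * (sum X A)^2"
  proof -
    have "(\<Sum>x\<in>A. \<Sum>y\<in>A. 2 * X x * X y) = 2 * (\<Sum>x\<in>A. \<Sum>y\<in>A. X x * X y)"
      by (simp add: sum_distrib_left mult.assoc)
    also have "(\<Sum>x\<in>A. \<Sum>y\<in>A. X x * X y) = (sum X A)^2" by (simp add: sum_product power2_eq_square)
    finally show ?thesis .
  qed
  show ?thesis using 1 2 3 by (simp add: sum.distrib sum_subtractf)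
qed

lemma cs_w:
  fixes c a b p :: "'a \<Rightarrow> real"
  assumes fin: "finite A" and c: "\<And>x. x \<in> A \<Longrightarrow> c x \<ge> 0" and p: "\<And>x. x \<in> A \<Longrightarrow> p x > 0"
  shows "(\<Sum>x\<in>A. c x * a x * b x)^2 \<le> (\<Sum>x\<in>A. c x * (a x)^2 * p x) * (\<Sum>x\<in>A. c x * (b x)^2 / p x)"
proof -
  have eq: "\<And>x y. x \<in> A \<Longrightarrow> y \<in> A \<Longrightarrow>
     c x * c y * (a x * p x * b y - a y * p y * b x)^2 / (p x * p y)
     = (c x * (a x)^2 * p x) * (c y * (b y)^2 / p y) + (c y * (a y)^2 * p y) * (c x * (b x)^2 / p x)
       - 2 * (c x * a x * b x) * (c y * a y * b y)"
  proof -
    fix x y assume "x \<in> A" "y \<in> A"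
    then have "p x > 0" "p y > 0" using p by auto
    then show "?thesis x y" by (simp add: field_simps power2_eq_square)
  qed
  have "0 \<le> (\<Sum>x\<in>A. \<Sum>y\<in>A. c x * c y * (a x * p x * b y - a y * p y * b x)^2 / (p x * p y))"
    using c p by (intro sum_nonneg divide_nonneg_pos mult_nonneg_nonneg) (auto intro: mult_pos_pos)
  also have "\<dots> = (\<Sum>x\<in>A. \<Sum>y\<in>A. (c x * (a x)^2 * p x) * (c y * (b y)^2 / p y) + (c y * (a y)^2 * p y) * (c x * (b x)^2 / p x)
       - 2 * (c x * a x * b x) * (c y * a y * b y))"
    by (intro sum.cong refl) (simp add: eq)
  also have "\<dots> = 2 * ((\<Sum>x\<in>A. c x * (a x)^2 * p x) * (\<Sum>x\<in>A. c x * (b x)^2 / p x)) - 2 * (\<Sum>x\<in>A. c x * a x * b x)^2"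
    by (rule dsum_aux)
  finally show ?thesis by simp
qed

lemma cs_card:
  fixes d :: "'a \<Rightarrow> real"
  assumes "finite A"
  shows "(\<Sum>x\<in>A. d x)^2 \<le> real (card A) * (\<Sum>x\<in>A. (d x)^2)"
  using cs_w[OF assms, of "\<lambda>_. 1" "\<lambda>_. 1" d "\<lambda>_. 1"] by (simp add: mult.commute)


definition sig :: "nat \<Rightarrow> nat \<Rightarrow> nat" where "sig N k = (2 * k) mod N"
definition tau :: "nat \<Rightarrow> nat \<Rightarrow> nat" where "tau N k = (2 * k + 1) mod N"

lemma inj_aff:
  fixes N :: nat assumes "odd N" shows "inj_on (\<lambda>k. (2 * k + r) mod N) {..<N}"
proof (rule inj_onI)
  fix x y assume x: "x \<in> {..<N}" and y: "y \<in> {..<N}" and e: "(2 * x + r) mod N = (2 * y + r) mod N"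
  have cop: "coprime N 2" using assms by simp
  { fix a b :: nat assume ab: "a \<le> b" "a < N" "b < N" "(2 * a + r) mod N = (2 * b + r) mod N"
    then have "N dvd (2 * b + r) - (2 * a + r)" using mod_eq_dvd_iff_nat[of "2*a+r" "2*b+r" N] by simp
    then have "N dvd 2 * (b - a)" by (simp add: right_diff_distrib')
    then have "N dvd (b - a)" using cop coprime_dvd_mult_right_iff by blast
    moreover have "b - a < N" using ab by simp
    ultimately have "b - a = 0" using dvd_imp_le by (metis gr0I nat_dvd_not_less)
    then have "a = b" using ab by simp }
  note * = this
  show "x = y"
  proof (cases "x \<le> y")
    case True then show ?thesis using * x y e by auto
  next
    case False then show ?thesis using *[of y x] x y e by auto
  qed
qed

lemma img_aff:
  fixes N :: nat assumes "odd N" shows "(\<lambda>k. (2 * k + r) mod N) ` {..<N} = {..<N}"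
proof -
  have N: "N > 0" using assms by (cases N) auto
  show ?thesis
    by (rule endo_inj_surj) (use N inj_aff[OF assms] in auto)
qed

lemma sum_aff:
  fixes N :: nat assumes "odd N" shows "(\<Sum>k<N. \<phi> ((2 * k + r) mod N)) = (\<Sum>i<N. (\<phi> i :: real))"
proof -
  have "(\<Sum>i<N. \<phi> i) = (\<Sum>i\<in>(\<lambda>k. (2 * k + r) mod N) ` {..<N}. \<phi> i)" using img_aff[OF assms] by simp
  also have "\<dots> = (\<Sum>k<N. \<phi> ((2 * k + r) mod N))" by (subst sum.reindex[OF inj_aff[OF assms]]) simp
  finally show ?thesis by simp
qed

lemma nxt_tau: "0 < N \<Longrightarrow> nxt N (tau N l) = sig N (Suc l)"
  by (simp add: nxt_def tau_def sig_def mod_Suc_eq)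

lemma prv_tau: "0 < N \<Longrightarrow> prv N (tau N l) = sig N l"
proof -
  assume N: "0 < N"
  have "tau N l + N - 1 = tau N l + (N - 1)" using N by simp
  then have "prv N (tau N l) = ((2 * l + 1) mod N + (N - 1)) mod N" by (simp add: prv_def tau_def)
  also have "\<dots> = (2 * l + 1 + (N - 1)) mod N" by (simp add: mod_add_left_eq)
  also have "2 * l + 1 + (N - 1) = 2 * l + N" using N by simp
  also have "(2 * l + N) mod N = sig N l" by (simp add: sig_def)
  finally show ?thesis .
qed

lemma poincare:
  fixes \<psi> :: "nat \<Rightarrow> real"
  assumes odd: "odd N" and mz: "(\<Sum>i<N. \<psi> i) = 0"
  shows "(\<Sum>i<N. (\<psi> i)^2) \<le> real N ^ 2 * (\<Sum>i<N. (\<psi> (nxt N i) - \<psi> (prv N i))^2)"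
proof -
  have N: "N > 0" using odd by (cases N) auto
  define w where "w k = \<psi> (sig N k)" for k
  define D where "D = (\<Sum>i<N. (\<psi> (nxt N i) - \<psi> (prv N i))^2)"
  have sw: "(\<Sum>k<N. \<phi> (sig N k)) = (\<Sum>i<N. (\<phi> i :: real))" for \<phi>
    using sum_aff[OF odd, of \<phi> 0] by (simp add: sig_def)
  have D: "D = (\<Sum>l<N. (w (Suc l) - w l)^2)"
  proof -
    have "(\<Sum>l<N. (w (Suc l) - w l)^2) = (\<Sum>l<N. (\<lambda>i. (\<psi> (nxt N i) - \<psi> (prv N i))^2) (tau N l))"
      by (intro sum.cong refl) (simp add: w_def nxt_tau prv_tau N)
    also have "\<dots> = D" unfolding D_def using sum_aff[OF odd, of _ 1] by (simp add: tau_def)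
    finally show ?thesis by simp
  qed
  have D0: "D \<ge> 0" unfolding D_def by (simp add: sum_nonneg)
  have 1: "(\<Sum>i<N. (\<psi> i)^2) = (\<Sum>k<N. (w k)^2)" unfolding w_def using sw[of "\<lambda>i. (\<psi> i)^2"] by simp
  have wz: "(\<Sum>k<N. w k) = 0" unfolding w_def using sw mz by simp
  have 2: "(\<Sum>k<N. (w k)^2) \<le> (\<Sum>k<N. (w k - w 0)^2)"
  proof -
    have "(\<Sum>k<N. (w k - w 0)^2) = (\<Sum>k<N. (w k)^2) - 2 * w 0 * (\<Sum>k<N. w k) + real N * (w 0)^2"
    proof -
      have "(\<Sum>k<N. (w k - w 0)^2) = (\<Sum>k<N. (w k)^2 - (2 * w 0) * w k + (w 0)^2)"
        by (intro sum.cong refl) (simp add: power2_diff algebra_simps)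
      also have "\<dots> = (\<Sum>k<N. (w k)^2) - (2 * w 0) * (\<Sum>k<N. w k) + real N * (w 0)^2"
        by (simp add: sum.distrib sum_subtractf sum_distrib_left)
      finally show ?thesis by simp
    qed
    then show ?thesis using wz by simp
  qed
  have 3: "(w k - w 0)^2 \<le> real N * D" if k: "k < N" for k
  proof -
    have "w k - w 0 = (\<Sum>l<k. w (Suc l) - w l)" by (simp add: sum_lessThan_telescope)
    then have "(w k - w 0)^2 \<le> real k * (\<Sum>l<k. (w (Suc l) - w l)^2)"
      using cs_card[of "{..<k}" "\<lambda>l. w (Suc l) - w l"] by simp
    also have "\<dots> \<le> real N * (\<Sum>l<k. (w (Suc l) - w l)^2)"
      using k by (intro mult_right_mono) (auto simp: sum_nonneg)
    also have "(\<Sum>l<k. (w (Suc l) - w l)^2) \<le> (\<Sum>l<N. (w (Suc l) - w l)^2)"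
      using k by (intro sum_mono2) auto
    finally show ?thesis using D by (simp add: mult_left_mono)
  qed
  have "(\<Sum>k<N. (w k - w 0)^2) \<le> (\<Sum>k<N. real N * D)" using 3 by (intro sum_mono) auto
  also have "\<dots> = real N ^ 2 * D" by (simp add: power2_eq_square)
  finally show ?thesis using 1 2 unfolding D_def by linarith
qed


lemma exists_anti:
  fixes u :: "nat \<Rightarrow> real"
  assumes odd: "odd N" and mz: "(\<Sum>i<N. u i) = 0"
  shows "\<exists>\<psi>. (\<forall>i<N. \<psi> (nxt N i) - \<psi> (prv N i) = u i) \<and> (\<Sum>i<N. \<psi> i) = 0"
proof -
  have N: "N > 0" using odd by (cases N) auto
  define \<phi> where "\<phi> k = (\<Sum>l<k. u (tau N l))" for k
  have injs: "inj_on (sig N) {..<N}" using inj_aff[OF odd, of 0] by (simp add: sig_def[abs_def])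
  define \<psi>0 where "\<psi>0 i = \<phi> (the_inv_into {..<N} (sig N) i)" for i
  have p0: "\<psi>0 (sig N k) = \<phi> k" if "k < N" for k
    unfolding \<psi>0_def using the_inv_into_f_f[OF injs] that by simp
  have tot: "(\<Sum>l<N. u (tau N l)) = 0" using sum_aff[OF odd, of u 1] mz by (simp add: tau_def)
  have rel: "\<psi>0 (nxt N i) - \<psi>0 (prv N i) = u i" if i: "i < N" for i
  proof -
    have "i \<in> (\<lambda>k. (2 * k + 1) mod N) ` {..<N}" using img_aff[OF odd, of 1] i by simp
    then obtain l where l: "l < N" and il: "i = tau N l" by (auto simp: tau_def)
    have pr: "\<psi>0 (prv N i) = \<phi> l" using il prv_tau[OF N] p0[OF l] by simp
    show ?thesis
    proof (cases "Suc l < N")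
      case True
      have "\<psi>0 (nxt N i) = \<phi> (Suc l)" using il nxt_tau[OF N] p0[OF True] by simp
      then show ?thesis using pr il by (simp add: \<phi>_def)
    next
      case False
      then have lN: "Suc l = N" using l by simp
      have "sig N (Suc l) = sig N 0" using lN by (simp add: sig_def)
      then have "\<psi>0 (nxt N i) = \<phi> 0" using il nxt_tau[OF N] p0[OF N] by simp
      moreover have "\<phi> (Suc l) = 0" using tot lN by (simp add: \<phi>_def)
      ultimately show ?thesis using pr il by (simp add: \<phi>_def)
    qed
  qed
  define c where "c = (\<Sum>i<N. \<psi>0 i) / real N"
  show ?thesis
  proof (intro exI[of _ "\<lambda>i. \<psi>0 i - c"] conjI allI impI)
    fix i assume "i < N" then show "(\<psi>0 (nxt N i) - c) - (\<psi>0 (prv N i) - c) = u i" using rel by simp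
  next
    show "(\<Sum>i<N. \<psi>0 i - c) = 0" using N by (simp add: sum_subtractf c_def)
  qed
qed

lemma unique_anti:
  fixes \<psi>1 \<psi>2 :: "nat \<Rightarrow> real"
  assumes odd: "odd N" and r: "\<And>i. i < N \<Longrightarrow> \<psi>1 (nxt N i) - \<psi>1 (prv N i) = \<psi>2 (nxt N i) - \<psi>2 (prv N i)"
    and s1: "(\<Sum>i<N. \<psi>1 i) = 0" and s2: "(\<Sum>i<N. \<psi>2 i) = 0" and i: "i < N"
  shows "\<psi>1 i = \<psi>2 i"
proof -
  define d where "d k = \<psi>1 k - \<psi>2 k" for k
  have "(\<Sum>i<N. d i) = 0" using s1 s2 by (simp add: d_def sum_subtractf)
  from poincare[OF odd this] have "(\<Sum>i<N. (d i)^2) \<le> real N ^ 2 * (\<Sum>i<N. (d (nxt N i) - d (prv N i))^2)" .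
  also have "(\<Sum>i<N. (d (nxt N i) - d (prv N i))^2) = 0" using r by (simp add: d_def algebra_simps)
  finally have "(\<Sum>i<N. (d i)^2) \<le> 0" by simp
  then have "(\<Sum>i<N. (d i)^2) = 0" by (simp add: antisym sum_nonneg)
  then have "(d i)^2 = 0" using i by (subst (asm) sum_nonneg_eq_0_iff) auto
  then show ?thesis by (simp add: d_def)
qed


locale setting =
  fixes N L :: nat and dx dv lam rho len vstar Dlo1 Dlo2 Dhi1 Dhi2 Q1 Q2 :: real
    and chi1 chi2 :: "int \<Rightarrow> real"
  assumes oddN: "odd N" and L1: "1 \<le> L" and dx_eq: "dx = len / real N" and dv_eq: "dv = vstar / real L"
    and lam_pos: "lam > 0" and rho_pos: "rho > 0" and len_pos: "len > 0" and vstar_pos: "vstar > 0"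
    and Dlo1_pos: "Dlo1 > 0" and Dlo2_pos: "Dlo2 > 0"
    and chi1_ok: "chi_ok L dv Dlo1 Dhi1 Q1 chi1" and chi2_ok: "chi_ok L dv Dlo2 Dhi2 Q2 chi2"
begin

abbreviation "JJ \<equiv> Jset L"
abbreviation "v \<equiv> vel dv"

definition M0 :: "(int \<Rightarrow> real) \<Rightarrow> real" where "M0 h = (\<Sum>j\<in>JJ. dv * h j)"
definition M1 :: "(int \<Rightarrow> real) \<Rightarrow> real" where "M1 h = (\<Sum>j\<in>JJ. dv * v j * h j)"
definition M2 :: "(int \<Rightarrow> real) \<Rightarrow> real" where "M2 h = (\<Sum>j\<in>JJ. dv * (v j)^2 * h j)"
definition EE :: "(int \<Rightarrow> real) \<Rightarrow> (int \<Rightarrow> real) \<Rightarrow> real" where "EE c h = (\<Sum>j\<in>JJ. dv * (h j)^2 / c j)"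

lemma finJ[simp]: "finite JJ" by (simp add: Jset_def)
lemma N_pos: "N > 0" using oddN by (cases N) auto
lemma dx_pos: "dx > 0" using len_pos N_pos by (simp add: dx_eq)
lemma dv_pos: "dv > 0" using vstar_pos L1 by (simp add: dv_eq)
lemma Ndx: "real N * dx = len" using N_pos by (simp add: dx_eq)

lemma vel_bound: "j \<in> JJ \<Longrightarrow> (v j)^2 \<le> vstar^2"
proof -
  assume j: "j \<in> JJ"
  have "\<bar>real_of_int j - 1/2\<bar> \<le> real L" using j L1 by (auto simp: Jset_def abs_if)
  then have "\<bar>v j\<bar> \<le> real L * dv" using dv_pos by (simp add: vel_def abs_mult mult_right_mono)
  also have "real L * dv = vstar" using L1 by (simp add: dv_eq)
  finally have "\<bar>v j\<bar> \<le> vstar" .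
  then show ?thesis by (metis abs_ge_zero power2_abs power_mono)
qed

lemma vel_refl: "v (1 - j) = - v j" by (simp add: vel_def algebra_simps)

context
  fixes Dl Dh Q :: real and chi :: "int \<Rightarrow> real"
  assumes ok: "chi_ok L dv Dl Dh Q chi" and Dl: "Dl > 0"
begin

lemma chi_pos: "j \<in> JJ \<Longrightarrow> chi j > 0" using ok unfolding chi_ok_def by blast
lemma chi_mass: "M0 chi = 1" using ok unfolding chi_ok_def M0_def by blast
lemma chi_D_lo: "Dl \<le> M2 chi" using ok unfolding chi_ok_def M2_def by blast
lemma chi_M1: "M1 chi = 0"
proof -
  have refl: "1 - j \<in> JJ" if "j \<in> JJ" for j using that by (auto simp: Jset_def)
  have sym: "chi (1 - j) = chi j" if "j \<in> JJ" for j using ok that unfolding chi_ok_def by metis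
  have "M1 chi = (\<Sum>j\<in>JJ. dv * v (1 - j) * chi (1 - j))"
    unfolding M1_def
    by (rule sum.reindex_bij_witness[where i="\<lambda>j. 1 - j" and j="\<lambda>j. 1 - j"]) (auto simp: refl)
  also have "\<dots> = - M1 chi" unfolding M1_def
    by (simp add: vel_refl sym sum_negf[symmetric] cong: sum.cong)
  finally show ?thesis by simp
qed
lemma chi_D_hi: "M2 chi \<le> vstar^2"
proof -
  have "M2 chi \<le> (\<Sum>j\<in>JJ. dv * vstar^2 * chi j)" unfolding M2_def
    using vel_bound chi_pos dv_pos by (intro sum_mono mult_right_mono mult_left_mono) (auto intro: less_imp_le)
  also have "\<dots> = vstar^2 * M0 chi" by (simp add: M0_def sum_distrib_left mult_ac)
  finally show ?thesis by (simp add: chi_mass)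
qed
lemma chi_D_pos: "M2 chi > 0" using chi_D_lo Dl by linarith

lemma M0_sq: "(M0 h)^2 \<le> EE chi h"
proof -
  have "(\<Sum>j\<in>JJ. dv * 1 * h j)^2 \<le> (\<Sum>j\<in>JJ. dv * 1^2 * chi j) * (\<Sum>j\<in>JJ. dv * (h j)^2 / chi j)"
    by (rule cs_w) (use dv_pos chi_pos in auto)
  then show ?thesis using chi_mass by (simp add: M0_def EE_def)
qed

definition micro :: "(int \<Rightarrow> real) \<Rightarrow> real" where "micro h = EE chi h - (M0 h)^2"

lemma micro_nonneg: "micro h \<ge> 0" using M0_sq by (simp add: micro_def)

lemma micro_alt: "micro h = (\<Sum>j\<in>JJ. dv * (h j - M0 h * chi j)^2 / chi j)"
proof -
  have "(\<Sum>j\<in>JJ. dv * (h j - M0 h * chi j)^2 / chi j)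
      = (\<Sum>j\<in>JJ. dv * (h j)^2 / chi j - 2 * M0 h * (dv * h j) + (M0 h)^2 * (dv * chi j))"
    by (intro sum.cong refl) (use chi_pos in \<open>force simp: field_simps power2_eq_square\<close>)
  also have "\<dots> = EE chi h - 2 * M0 h * M0 h + (M0 h)^2 * M0 chi"
    by (simp add: sum.distrib sum_subtractf sum_distrib_left EE_def M0_def)
  finally show ?thesis by (simp add: chi_mass micro_def power2_eq_square)
qed

lemma M1_micro: "(M1 h)^2 \<le> M2 chi * micro h"
proof -
  have "M1 h = (\<Sum>j\<in>JJ. dv * v j * (h j - M0 h * chi j))"
  proof -
    have "(\<Sum>j\<in>JJ. dv * v j * (h j - M0 h * chi j)) = M1 h - M0 h * M1 chi"
      by (simp add: M1_def algebra_simps sum_subtractf sum_distrib_left)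
    then show ?thesis by (simp add: chi_M1)
  qed
  also have "(\<dots>)^2 \<le> (\<Sum>j\<in>JJ. dv * (v j)^2 * chi j) * (\<Sum>j\<in>JJ. dv * (h j - M0 h * chi j)^2 / chi j)"
    by (rule cs_w) (use dv_pos chi_pos in auto)
  finally show ?thesis by (simp add: micro_alt M2_def)
qed

lemma M2_micro: "(M2 h - M2 chi * M0 h)^2 \<le> vstar^4 * micro h"
proof -
  have "M2 h - M2 chi * M0 h = (\<Sum>j\<in>JJ. dv * (v j)^2 * (h j - M0 h * chi j))"
    by (simp add: M2_def algebra_simps sum_subtractf sum_distrib_left)
  also have "(\<dots>)^2 \<le> (\<Sum>j\<in>JJ. dv * ((v j)^2)^2 * chi j) * (\<Sum>j\<in>JJ. dv * (h j - M0 h * chi j)^2 / chi j)"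
    by (rule cs_w) (use dv_pos chi_pos in auto)
  finally have A: "(M2 h - M2 chi * M0 h)^2 \<le> (\<Sum>j\<in>JJ. dv * ((v j)^2)^2 * chi j) * micro h"
    by (simp add: micro_alt)
  have "(\<Sum>j\<in>JJ. dv * ((v j)^2)^2 * chi j) \<le> (\<Sum>j\<in>JJ. dv * (vstar^2)^2 * chi j)"
  proof (intro sum_mono mult_right_mono mult_left_mono)
    fix j assume j: "j \<in> JJ"
    show "((v j)^2)^2 \<le> (vstar^2)^2" using vel_bound[OF j] by (rule power_mono) auto
  qed (use dv_pos chi_pos in \<open>auto intro: less_imp_le\<close>)
  also have "\<dots> = vstar^4 * M0 chi" by (simp add: M0_def sum_distrib_left mult_ac)
  also have "\<dots> = vstar^4" by (simp add: chi_mass)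
  finally have B: "(\<Sum>j\<in>JJ. dv * ((v j)^2)^2 * chi j) \<le> vstar^4" .
  show ?thesis using A mult_right_mono[OF B micro_nonneg[of h]] by linarith
qed

end

end


definition Dmin :: "real \<Rightarrow> real \<Rightarrow> real" where "Dmin a b = min a b"
definition cone :: "real \<Rightarrow> real" where "cone r = r + 1 / r"
definition czero :: "real \<Rightarrow> real" where "czero r = min (1 / r^2) (r^2)"
definition Gam :: "real \<Rightarrow> real \<Rightarrow> real \<Rightarrow> real" where
  "Gam r vs Dm = 2 / Dm + 2 * vs^2 + 2 * vs^4 / Dm^2 + 2 * (r^2 + 1 / r^2) / Dm"
definition epsH :: "real \<Rightarrow> real \<Rightarrow> real \<Rightarrow> real" where
  "epsH r lnn Dm = 1 / (2 * cone r * (2 / Dm + 8 * lnn^2))"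
definition epsK :: "real \<Rightarrow> real \<Rightarrow> real \<Rightarrow> real \<Rightarrow> real" where
  "epsK r lnn vs Dm = czero r / (2 * (2 + 4 * lnn^2) * Gam r vs Dm)"
definition epsC :: "real \<Rightarrow> real \<Rightarrow> real \<Rightarrow> real \<Rightarrow> real" where
  "epsC r lnn vs Dm = min 1 (min (epsH r lnn Dm) (epsK r lnn vs Dm))"
definition kapC :: "real \<Rightarrow> real \<Rightarrow> real \<Rightarrow> real \<Rightarrow> real" where
  "kapC r lnn vs Dm = min (czero r / (3 * cone r)) (epsC r lnn vs Dm / 3)"

context setting begin

abbreviation "D1 \<equiv> M2 chi1"
abbreviation "D2 \<equiv> M2 chi2"
abbreviation "Dm \<equiv> Dmin Dlo1 Dlo2"
abbreviation "mic1 \<equiv> micro chi1"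
abbreviation "mic2 \<equiv> micro chi2"

lemmas chi1_pos = chi_pos[OF chi1_ok Dlo1_pos]
lemmas chi2_pos = chi_pos[OF chi2_ok Dlo2_pos]
lemmas chi1_mass = chi_mass[OF chi1_ok Dlo1_pos]
lemmas chi2_mass = chi_mass[OF chi2_ok Dlo2_pos]
lemmas chi1_M1 = chi_M1[OF chi1_ok Dlo1_pos]
lemmas chi2_M1 = chi_M1[OF chi2_ok Dlo2_pos]
lemmas M0_sq1 = M0_sq[OF chi1_ok Dlo1_pos]
lemmas M0_sq2 = M0_sq[OF chi2_ok Dlo2_pos]
lemmas mic1_nonneg = micro_nonneg[OF chi1_ok Dlo1_pos]
lemmas mic2_nonneg = micro_nonneg[OF chi2_ok Dlo2_pos]
lemmas M1_mic1 = M1_micro[OF chi1_ok Dlo1_pos]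
lemmas M1_mic2 = M1_micro[OF chi2_ok Dlo2_pos]
lemmas M2_mic1 = M2_micro[OF chi1_ok Dlo1_pos]
lemmas M2_mic2 = M2_micro[OF chi2_ok Dlo2_pos]

lemma Dm_pos: "Dm > 0" using Dlo1_pos Dlo2_pos by (simp add: Dmin_def)
lemma D1_ge: "D1 \<ge> Dm" using chi_D_lo[OF chi1_ok Dlo1_pos] by (simp add: Dmin_def)
lemma D2_ge: "D2 \<ge> Dm" using chi_D_lo[OF chi2_ok Dlo2_pos] by (simp add: Dmin_def)
lemma D1_pos: "D1 > 0" using D1_ge Dm_pos by linarith
lemma D2_pos: "D2 > 0" using D2_ge Dm_pos by linarith
lemma D1_le: "D1 \<le> vstar^2" using chi_D_hi[OF chi1_ok Dlo1_pos] .
lemma D2_le: "D2 \<le> vstar^2" using chi_D_hi[OF chi2_ok Dlo2_pos] .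

lemma EE_nonneg1: "EE chi1 h \<ge> 0" unfolding EE_def using dv_pos chi1_pos by (intro sum_nonneg) (auto intro: divide_nonneg_pos)
lemma EE_nonneg2: "EE chi2 h \<ge> 0" unfolding EE_def using dv_pos chi2_pos by (intro sum_nonneg) (auto intro: divide_nonneg_pos)
lemma mic1_le: "mic1 h \<le> EE chi1 h" by (simp add: micro_def[OF chi1_ok Dlo1_pos])
lemma mic2_le: "mic2 h \<le> EE chi2 h" by (simp add: micro_def[OF chi2_ok Dlo2_pos])

lemma cone_pos: "cone rho > 0" using rho_pos by (simp add: cone_def add_pos_pos)

lemma cell_E: "EE chi1 f + EE chi2 g \<le> cone rho * (EE chi1 f / rho + rho * EE chi2 g)"
proof -
  have a: "EE chi1 f \<le> cone rho * (EE chi1 f / rho)"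
  proof -
    have "cone rho * (EE chi1 f / rho) = EE chi1 f + EE chi1 f / rho^2" using rho_pos
      by (simp add: cone_def field_simps power2_eq_square)
    moreover have "EE chi1 f / rho^2 \<ge> 0" using EE_nonneg1[of f] by simp
    ultimately show ?thesis by linarith
  qed
  have b: "EE chi2 g \<le> cone rho * (rho * EE chi2 g)"
  proof -
    have "cone rho * (rho * EE chi2 g) = EE chi2 g + rho^2 * EE chi2 g" using rho_pos
      by (simp add: cone_def field_simps power2_eq_square)
    moreover have "rho^2 * EE chi2 g \<ge> 0" using EE_nonneg2[of g] by simp
    ultimately show ?thesis by linarith
  qed
  show ?thesis using a b by (simp add: distrib_left)
qed

lemma diff_sq_le: "((a::real) - b)^2 \<le> 2 * a^2 + 2 * b^2"
proof -
  have "2 * a^2 + 2 * b^2 - (a - b)^2 = (a + b)^2" by (simp add: power2_eq_square algebra_simps)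
  moreover have "(a + b)^2 \<ge> 0" by simp
  ultimately show ?thesis by linarith
qed

lemma cell_m: "(M0 f - M0 g)^2 \<le> 2 * (EE chi1 f + EE chi2 g)"
proof -
  have "(M0 f - M0 g)^2 \<le> 2 * (M0 f)^2 + 2 * (M0 g)^2" by (rule diff_sq_le)
  then have "(M0 f - M0 g)^2 \<le> 2 * EE chi1 f + 2 * EE chi2 g" using M0_sq1[of f] M0_sq2[of g] by linarith
  then show ?thesis by (simp add: distrib_left)
qed

lemma M1sq_le1: "(M1 f / D1)^2 \<le> mic1 f / Dm"
proof -
  have "(M1 f / D1)^2 = (M1 f)^2 / D1^2" by (simp add: power_divide)
  also have "\<dots> \<le> D1 * mic1 f / D1^2" using M1_mic1[of f] D1_pos by (intro divide_right_mono) auto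
  also have "\<dots> = mic1 f / D1" using D1_pos by (simp add: power2_eq_square)
  also have "\<dots> \<le> mic1 f / Dm" using D1_ge Dm_pos mic1_nonneg[of f] by (intro divide_left_mono) auto
  finally show ?thesis .
qed

lemma M1sq_le2: "(M1 g / D2)^2 \<le> mic2 g / Dm"
proof -
  have "(M1 g / D2)^2 = (M1 g)^2 / D2^2" by (simp add: power_divide)
  also have "\<dots> \<le> D2 * mic2 g / D2^2" using M1_mic2[of g] D2_pos by (intro divide_right_mono) auto
  also have "\<dots> = mic2 g / D2" using D2_pos by (simp add: power2_eq_square)
  also have "\<dots> \<le> mic2 g / Dm" using D2_ge Dm_pos mic2_nonneg[of g] by (intro divide_left_mono) auto
  finally show ?thesis .
qed


lemma cell_Y: "(M1 f / D1 - M1 g / D2)^2 \<le> (2 / Dm) * (mic1 f + mic2 g)"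
proof -
  have "(M1 f / D1 - M1 g / D2)^2 \<le> 2 * (M1 f / D1)^2 + 2 * (M1 g / D2)^2" by (rule diff_sq_le)
  also have "\<dots> \<le> 2 * (mic1 f / Dm) + 2 * (mic2 g / Dm)" using M1sq_le1[of f] M1sq_le2[of g] by linarith
  also have "\<dots> = (2 / Dm) * (mic1 f + mic2 g)" by (simp add: add_divide_distrib)
  finally show ?thesis .
qed

end


context setting begin

definition SS :: "(nat \<Rightarrow> real) \<Rightarrow> real" where "SS \<phi> = (\<Sum>i<N. dx * \<phi> i)"
definition nrm :: "(nat \<Rightarrow> int \<Rightarrow> real) \<Rightarrow> (nat \<Rightarrow> int \<Rightarrow> real) \<Rightarrow> real" where
  "nrm f g = (\<Sum>i<N. \<Sum>j\<in>JJ. dx * dv * ((f i j)^2 / (chi1 j * rho) + (g i j)^2 * rho / chi2 j))"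
definition mm :: "(nat \<Rightarrow> int \<Rightarrow> real) \<Rightarrow> (nat \<Rightarrow> int \<Rightarrow> real) \<Rightarrow> nat \<Rightarrow> real" where
  "mm f g i = M0 (f i) - M0 (g i)"
definition YY :: "(nat \<Rightarrow> int \<Rightarrow> real) \<Rightarrow> (nat \<Rightarrow> int \<Rightarrow> real) \<Rightarrow> nat \<Rightarrow> real" where
  "YY f g i = M1 (f i) / D1 - M1 (g i) / D2"
definition avg :: "(nat \<Rightarrow> real) \<Rightarrow> real" where "avg u = (\<Sum>i<N. u i) / real N"
definition psirel :: "(nat \<Rightarrow> real) \<Rightarrow> (nat \<Rightarrow> real) \<Rightarrow> bool" where
  "psirel u \<psi> \<longleftrightarrow> (\<forall>i<N. \<psi> (nxt N i) - \<psi> (prv N i) = 2 * dx * (u i - avg u)) \<and> (\<Sum>i<N. \<psi> i) = 0"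
definition Hq :: "real \<Rightarrow> (nat \<Rightarrow> int \<Rightarrow> real) \<Rightarrow> (nat \<Rightarrow> int \<Rightarrow> real) \<Rightarrow> (nat \<Rightarrow> real) \<Rightarrow> real" where
  "Hq e f g \<psi> = nrm f g - 2 * e * SS (\<lambda>i. YY f g i * \<psi> i)"

lemma SS_mono: "(\<And>i. i < N \<Longrightarrow> a i \<le> b i) \<Longrightarrow> SS a \<le> SS b"
  unfolding SS_def using dx_pos by (intro sum_mono mult_left_mono) auto
lemma SS_add: "SS (\<lambda>i. a i + b i) = SS a + SS b" by (simp add: SS_def sum.distrib distrib_left)
lemma SS_diff: "SS (\<lambda>i. a i - b i) = SS a - SS b" by (simp add: SS_def sum_subtractf right_diff_distrib)
lemma SS_cmult: "SS (\<lambda>i. c * a i) = c * SS a" by (simp add: SS_def sum_distrib_left mult_ac)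
lemma SS_nonneg: "(\<And>i. i < N \<Longrightarrow> 0 \<le> a i) \<Longrightarrow> 0 \<le> SS a"
  unfolding SS_def using dx_pos by (intro sum_nonneg mult_nonneg_nonneg) auto

lemma nrm_cell: "nrm f g = SS (\<lambda>i. EE chi1 (f i) / rho + rho * EE chi2 (g i))"
proof -
  have "(\<Sum>j\<in>JJ. dx * dv * ((f i j)^2 / (chi1 j * rho) + (g i j)^2 * rho / chi2 j))
        = dx * (EE chi1 (f i) / rho + rho * EE chi2 (g i))" for i
  proof -
    have "(\<Sum>j\<in>JJ. dx * dv * ((f i j)^2 / (chi1 j * rho) + (g i j)^2 * rho / chi2 j))
        = (\<Sum>j\<in>JJ. (dx / rho) * (dv * (f i j)^2 / chi1 j) + (dx * rho) * (dv * (g i j)^2 / chi2 j))"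
      by (intro sum.cong refl) (simp add: field_simps)
    also have "\<dots> = (dx / rho) * EE chi1 (f i) + (dx * rho) * EE chi2 (g i)"
      by (simp add: sum.distrib sum_distrib_left EE_def)
    finally show ?thesis by (simp add: algebra_simps)
  qed
  then show ?thesis by (simp add: nrm_def SS_def)
qed

lemma nrm_nonneg: "nrm f g \<ge> 0"
  unfolding nrm_cell using rho_pos EE_nonneg1 EE_nonneg2 by (intro SS_nonneg) auto

lemma var_le: "(\<Sum>i<N. (u i - avg u)^2) \<le> (\<Sum>i<N. (u i)^2)"
proof -
  have "(\<Sum>i<N. (u i - avg u)^2) = (\<Sum>i<N. (u i)^2 - (2 * avg u) * u i + (avg u)^2)"
    by (intro sum.cong refl) (simp add: power2_diff algebra_simps)
  also have "\<dots> = (\<Sum>i<N. (u i)^2) - (2 * avg u) * (\<Sum>i<N. u i) + real N * (avg u)^2"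
    by (simp add: sum.distrib sum_subtractf sum_distrib_left)
  also have "(\<Sum>i<N. u i) = real N * avg u" using N_pos by (simp add: avg_def)
  finally have "(\<Sum>i<N. (u i - avg u)^2) = (\<Sum>i<N. (u i)^2) - real N * (avg u)^2"
    by (simp add: power2_eq_square)
  moreover have "real N * (avg u)^2 \<ge> 0" by simp
  ultimately show ?thesis by linarith
qed

lemma psi_bound:
  assumes "psirel u \<psi>"
  shows "SS (\<lambda>i. (\<psi> i)^2) \<le> 4 * len^2 * SS (\<lambda>i. (u i)^2)"
proof -
  have rel: "\<And>i. i < N \<Longrightarrow> \<psi> (nxt N i) - \<psi> (prv N i) = 2 * dx * (u i - avg u)"
   and mz: "(\<Sum>i<N. \<psi> i) = 0" using assms by (auto simp: psirel_def)
  have "(\<Sum>i<N. (\<psi> i)^2) \<le> real N ^ 2 * (\<Sum>i<N. (\<psi> (nxt N i) - \<psi> (prv N i))^2)"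
    by (rule poincare[OF oddN mz])
  also have "(\<Sum>i<N. (\<psi> (nxt N i) - \<psi> (prv N i))^2) = (\<Sum>i<N. 4 * dx^2 * (u i - avg u)^2)"
    by (intro sum.cong refl) (simp add: rel power_mult_distrib)
  also have "\<dots> = 4 * dx^2 * (\<Sum>i<N. (u i - avg u)^2)" by (simp add: sum_distrib_left)
  also have "real N ^ 2 * (4 * dx^2 * (\<Sum>i<N. (u i - avg u)^2)) = 4 * len^2 * (\<Sum>i<N. (u i - avg u)^2)"
    using Ndx by (simp add: power_mult_distrib[symmetric] mult_ac)
  also have "\<dots> \<le> 4 * len^2 * (\<Sum>i<N. (u i)^2)" using var_le by (intro mult_left_mono) auto
  finally have "(\<Sum>i<N. (\<psi> i)^2) \<le> 4 * len^2 * (\<Sum>i<N. (u i)^2)" .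
  then have "dx * (\<Sum>i<N. (\<psi> i)^2) \<le> dx * (4 * len^2 * (\<Sum>i<N. (u i)^2))"
    using dx_pos by (intro mult_left_mono) auto
  then show ?thesis by (simp add: SS_def sum_distrib_left mult_ac)
qed

lemma twoab: "2 * (a::real) * b \<le> a^2 + b^2"
proof -
  have "a^2 + b^2 - 2 * a * b = (a - b)^2" by (simp add: power2_diff)
  then show ?thesis using zero_le_power2[of "a - b"] by linarith
qed

lemma abs_twoab: "\<bar>2 * (a::real) * b\<bar> \<le> a^2 + b^2"
  using twoab[of a b] twoab[of "-a" b] by (simp add: abs_if)

lemma Hpos:
  assumes rel: "psirel (mm f g) \<psi>" and e0: "0 \<le> e" and e1: "e \<le> epsH rho len Dm"
  shows "nrm f g / 2 \<le> Hq e f g \<psi> \<and> Hq e f g \<psi> \<le> 3 / 2 * nrm f g"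
proof -
  define En where "En i = EE chi1 (f i) / rho + rho * EE chi2 (g i)" for i
  have nr: "nrm f g = SS En" by (simp add: nrm_cell En_def[abs_def])
  have Y2: "SS (\<lambda>i. (YY f g i)^2) \<le> (2 / Dm) * cone rho * nrm f g"
  proof -
    have "SS (\<lambda>i. (YY f g i)^2) \<le> SS (\<lambda>i. ((2 / Dm) * cone rho) * En i)"
    proof (rule SS_mono)
      fix i
      have "(YY f g i)^2 \<le> (2 / Dm) * (mic1 (f i) + mic2 (g i))" unfolding YY_def by (rule cell_Y)
      also have "\<dots> \<le> (2 / Dm) * (EE chi1 (f i) + EE chi2 (g i))"
        using mic1_le mic2_le Dm_pos by (intro mult_left_mono add_mono) auto
      also have "\<dots> \<le> (2 / Dm) * (cone rho * En i)"
        using cell_E Dm_pos unfolding En_def by (intro mult_left_mono) auto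
      finally show "(YY f g i)^2 \<le> ((2 / Dm) * cone rho) * En i" by (simp add: mult_ac)
    qed
    then show ?thesis by (simp only: SS_cmult nr)
  qed
  have m2: "SS (\<lambda>i. (mm f g i)^2) \<le> 2 * cone rho * nrm f g"
  proof -
    have "SS (\<lambda>i. (mm f g i)^2) \<le> SS (\<lambda>i. (2 * cone rho) * En i)"
    proof (rule SS_mono)
      fix i
      have "(mm f g i)^2 \<le> 2 * (EE chi1 (f i) + EE chi2 (g i))" unfolding mm_def by (rule cell_m)
      also have "\<dots> \<le> 2 * (cone rho * En i)"
        using cell_E unfolding En_def by (intro mult_left_mono) auto
      finally show "(mm f g i)^2 \<le> (2 * cone rho) * En i" by (simp add: mult_ac)
    qed
    then show ?thesis by (simp only: SS_cmult nr)
  qed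
  have p2: "SS (\<lambda>i. (\<psi> i)^2) \<le> 4 * len^2 * (2 * cone rho * nrm f g)"
    by (rule order_trans[OF psi_bound[OF rel] mult_left_mono[OF m2]]) simp
  have cr: "\<bar>2 * SS (\<lambda>i. YY f g i * \<psi> i)\<bar> \<le> SS (\<lambda>i. (YY f g i)^2) + SS (\<lambda>i. (\<psi> i)^2)"
  proof -
    have "\<bar>2 * SS (\<lambda>i. YY f g i * \<psi> i)\<bar> = \<bar>SS (\<lambda>i. 2 * YY f g i * \<psi> i)\<bar>"
      by (simp add: SS_cmult[symmetric] mult_ac)
    also have "\<dots> \<le> SS (\<lambda>i. \<bar>2 * YY f g i * \<psi> i\<bar>)"
    proof -
      have "\<bar>\<Sum>i<N. dx * (2 * YY f g i * \<psi> i)\<bar> \<le> (\<Sum>i<N. \<bar>dx * (2 * YY f g i * \<psi> i)\<bar>)" by (rule sum_abs)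
      also have "\<dots> = (\<Sum>i<N. dx * \<bar>2 * YY f g i * \<psi> i\<bar>)" using dx_pos by (simp add: abs_mult)
      finally show ?thesis by (simp add: SS_def)
    qed
    also have "\<dots> \<le> SS (\<lambda>i. (YY f g i)^2 + (\<psi> i)^2)" by (rule SS_mono) (rule abs_twoab)
    finally show ?thesis by (simp add: SS_add)
  qed
  have tot: "\<bar>2 * SS (\<lambda>i. YY f g i * \<psi> i)\<bar> \<le> cone rho * (2 / Dm + 8 * len^2) * nrm f g"
    using cr Y2 p2 by (simp add: algebra_simps)
  have "e * (cone rho * (2 / Dm + 8 * len^2)) \<le> 1 / 2"
  proof -
    have pos: "cone rho * (2 / Dm + 8 * len^2) > 0" using cone_pos Dm_pos by (intro mult_pos_pos add_pos_nonneg) auto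
    have "e * (cone rho * (2 / Dm + 8 * len^2)) \<le> epsH rho len Dm * (cone rho * (2 / Dm + 8 * len^2))"
      using e1 pos by (intro mult_right_mono) auto
    also have "\<dots> = 1 / 2"
    proof -
      define X where "X = cone rho * (2 / Dm + 8 * len^2)"
      have "epsH rho len Dm = 1 / (2 * X)" unfolding epsH_def X_def by (simp add: mult.assoc)
      then show ?thesis using pos unfolding X_def[symmetric] by simp
    qed
    finally show ?thesis .
  qed
  then have "e * \<bar>2 * SS (\<lambda>i. YY f g i * \<psi> i)\<bar> \<le> nrm f g / 2"
  proof -
    assume h: "e * (cone rho * (2 / Dm + 8 * len^2)) \<le> 1 / 2"
    have "e * \<bar>2 * SS (\<lambda>i. YY f g i * \<psi> i)\<bar> \<le> e * (cone rho * (2 / Dm + 8 * len^2) * nrm f g)"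
      using tot e0 by (rule mult_left_mono)
    also have "\<dots> = (e * (cone rho * (2 / Dm + 8 * len^2))) * nrm f g" by (simp add: mult_ac)
    also have "\<dots> \<le> (1/2) * nrm f g" using h nrm_nonneg[of f g] by (rule mult_right_mono)
    finally show ?thesis by simp
  qed
  then have "\<bar>2 * e * SS (\<lambda>i. YY f g i * \<psi> i)\<bar> \<le> nrm f g / 2" using e0 by (simp add: abs_mult mult_ac)
  then have "2 * e * SS (\<lambda>i. YY f g i * \<psi> i) \<le> nrm f g / 2 \<and> - (2 * e * SS (\<lambda>i. YY f g i * \<psi> i)) \<le> nrm f g / 2"
    by (simp only: abs_le_iff)
  then show ?thesis unfolding Hq_def by linarith
qed

end


lemma sbp_self: "(\<Sum>i<N. a i * (a (nxt N i) - a (prv N i))) = (0::real)"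
  using sbp_c[where N=N and a=a and b=a] by (simp add: mult.commute)

lemma sbp_lap_self: "(\<Sum>i<N. a i * (a (nxt N i) - 2 * a i + a (prv N i))) = - (\<Sum>i<N. (a (nxt N i) - a i)^2 :: real)"
  using sbp_lap[where N=N and a=a and b=a] by (simp add: power2_eq_square)

context setting begin

definition dl :: "(nat \<Rightarrow> int \<Rightarrow> real) \<Rightarrow> nat \<Rightarrow> int \<Rightarrow> real" where
  "dl h i j = h (nxt N i) j - h i j"

lemma species:
  fixes h C B :: "nat \<Rightarrow> int \<Rightarrow> real" and w :: "int \<Rightarrow> real"
  assumes Beq: "\<And>i j. B i j = v j * (h (nxt N i) j - h (prv N i) j) / (2 * dx)
            - lam / dx * (h (nxt N i) j - 2 * h i j + h (prv N i) j) + C i j"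
  shows "(\<Sum>i<N. \<Sum>j\<in>JJ. dx * dv * (h i j * B i j * w j))
       = (\<Sum>i<N. \<Sum>j\<in>JJ. dx * dv * (h i j * C i j * w j))
         + lam / dx * (\<Sum>i<N. \<Sum>j\<in>JJ. dx * dv * ((dl h i j)^2 * w j))"
proof -
  define T where "T i j = (dv * v j * w j / 2) * (h i j * (h (nxt N i) j - h (prv N i) j))" for i j
  define D where "D i j = (- dv * lam * w j) * (h i j * (h (nxt N i) j - 2 * h i j + h (prv N i) j))" for i j
  have split: "dx * dv * (h i j * B i j * w j)
        = T i j + D i j + dx * dv * (h i j * C i j * w j)" for i j
    using dx_pos unfolding T_def D_def Beq by (simp add: field_simps)
  have T0: "(\<Sum>i<N. \<Sum>j\<in>JJ. T i j) = 0"
  proof -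
    have "(\<Sum>i<N. \<Sum>j\<in>JJ. T i j) = (\<Sum>j\<in>JJ. \<Sum>i<N. T i j)" by (rule sum.swap)
    also have "\<dots> = (\<Sum>j\<in>JJ. (dv * v j * w j / 2) * (\<Sum>i<N. h i j * (h (nxt N i) j - h (prv N i) j)))"
      unfolding T_def by (simp add: sum_distrib_left)
    also have "\<dots> = 0" using sbp_self[of "\<lambda>i. h i _"] by simp
    finally show ?thesis .
  qed
  have D0: "(\<Sum>i<N. \<Sum>j\<in>JJ. D i j) = lam / dx * (\<Sum>i<N. \<Sum>j\<in>JJ. dx * dv * ((dl h i j)^2 * w j))"
  proof -
    have "(\<Sum>i<N. \<Sum>j\<in>JJ. D i j) = (\<Sum>j\<in>JJ. \<Sum>i<N. D i j)" by (rule sum.swap)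
    also have "\<dots> = (\<Sum>j\<in>JJ. (- dv * lam * w j) * (\<Sum>i<N. h i j * (h (nxt N i) j - 2 * h i j + h (prv N i) j)))"
      unfolding D_def by (simp add: sum_distrib_left)
    also have "\<dots> = (\<Sum>j\<in>JJ. (dv * lam * w j) * (\<Sum>i<N. (dl h i j)^2))"
      using sbp_lap_self[of "\<lambda>i. h i _"] by (simp add: dl_def)
    also have "\<dots> = (\<Sum>j\<in>JJ. \<Sum>i<N. lam / dx * (dx * dv * ((dl h i j)^2 * w j)))"
      using dx_pos by (simp add: sum_distrib_left mult_ac)
    also have "\<dots> = lam / dx * (\<Sum>i<N. \<Sum>j\<in>JJ. dx * dv * ((dl h i j)^2 * w j))"
      by (subst sum.swap) (simp add: sum_distrib_left)
    finally show ?thesis .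
  qed
  show ?thesis
    by (simp only: split sum.distrib T0 D0)
qed

definition Bf :: "(nat \<Rightarrow> int \<Rightarrow> real) \<Rightarrow> (nat \<Rightarrow> int \<Rightarrow> real) \<Rightarrow> nat \<Rightarrow> int \<Rightarrow> real" where
  "Bf f g i j = v j * (f (nxt N i) j - f (prv N i) j) / (2 * dx)
      - lam / dx * (f (nxt N i) j - 2 * f i j + f (prv N i) j) + (rho * chi1 j * M0 (g i) + f i j / rho)"
definition Bg :: "(nat \<Rightarrow> int \<Rightarrow> real) \<Rightarrow> (nat \<Rightarrow> int \<Rightarrow> real) \<Rightarrow> nat \<Rightarrow> int \<Rightarrow> real" where
  "Bg f g i j = v j * (g (nxt N i) j - g (prv N i) j) / (2 * dx)
      - lam / dx * (g (nxt N i) j - 2 * g i j + g (prv N i) j) + (chi2 j * M0 (f i) / rho + rho * g i j)"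

definition ip :: "(nat \<Rightarrow> int \<Rightarrow> real) \<Rightarrow> (nat \<Rightarrow> int \<Rightarrow> real) \<Rightarrow> (nat \<Rightarrow> int \<Rightarrow> real) \<Rightarrow> (nat \<Rightarrow> int \<Rightarrow> real) \<Rightarrow> real" where
  "ip f g f2 g2 = (\<Sum>i<N. \<Sum>j\<in>JJ. dx * dv * (f i j * f2 i j / (chi1 j * rho) + g i j * g2 i j * rho / chi2 j))"

definition Dcell :: "(int \<Rightarrow> real) \<Rightarrow> (int \<Rightarrow> real) \<Rightarrow> real" where
  "Dcell a b = EE chi1 a / rho^2 + rho^2 * EE chi2 b + 2 * M0 a * M0 b"

lemma coll_f: "(\<Sum>j\<in>JJ. dx * dv * (f i j * (rho * chi1 j * M0 (g i) + f i j / rho) * (1 / (chi1 j * rho))))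
   = dx * (M0 (f i) * M0 (g i) + EE chi1 (f i) / rho^2)"
proof -
  have "(\<Sum>j\<in>JJ. dx * dv * (f i j * (rho * chi1 j * M0 (g i) + f i j / rho) * (1 / (chi1 j * rho))))
      = (\<Sum>j\<in>JJ. (dx * M0 (g i)) * (dv * f i j) + (dx / rho^2) * (dv * (f i j)^2 / chi1 j))"
    by (intro sum.cong refl) (use rho_pos chi1_pos in \<open>force simp: field_simps power2_eq_square\<close>)
  also have "\<dots> = (dx * M0 (g i)) * M0 (f i) + (dx / rho^2) * EE chi1 (f i)"
    by (simp only: sum.distrib sum_distrib_left[symmetric] M0_def EE_def)
  also have "\<dots> = dx * (M0 (f i) * M0 (g i) + EE chi1 (f i) / rho^2)" by (simp add: algebra_simps)
  finally show ?thesis .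
qed

lemma coll_g: "(\<Sum>j\<in>JJ. dx * dv * (g i j * (chi2 j * M0 (f i) / rho + rho * g i j) * (rho / chi2 j)))
   = dx * (M0 (f i) * M0 (g i) + rho^2 * EE chi2 (g i))"
proof -
  have "(\<Sum>j\<in>JJ. dx * dv * (g i j * (chi2 j * M0 (f i) / rho + rho * g i j) * (rho / chi2 j)))
      = (\<Sum>j\<in>JJ. (dx * M0 (f i)) * (dv * g i j) + (dx * rho^2) * (dv * (g i j)^2 / chi2 j))"
    by (intro sum.cong refl) (use rho_pos chi2_pos in \<open>force simp: field_simps power2_eq_square\<close>)
  also have "\<dots> = (dx * M0 (f i)) * M0 (g i) + (dx * rho^2) * EE chi2 (g i)"
    by (simp only: sum.distrib sum_distrib_left[symmetric] M0_def EE_def)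
  also have "\<dots> = dx * (M0 (f i) * M0 (g i) + rho^2 * EE chi2 (g i))" by (simp add: algebra_simps)
  finally show ?thesis .
qed

lemma energy:
  "ip f g (Bf f g) (Bg f g) = SS (\<lambda>i. Dcell (f i) (g i)) + lam / dx * nrm (dl f) (dl g)"
proof -
  have e1: "ip f g (Bf f g) (Bg f g) =
      (\<Sum>i<N. \<Sum>j\<in>JJ. dx * dv * (f i j * Bf f g i j * (1 / (chi1 j * rho))))
    + (\<Sum>i<N. \<Sum>j\<in>JJ. dx * dv * (g i j * Bg f g i j * (rho / chi2 j)))"
    unfolding ip_def sum.distrib[symmetric]
    by (intro sum.cong refl) (simp add: distrib_left)
  have s1: "(\<Sum>i<N. \<Sum>j\<in>JJ. dx * dv * (f i j * Bf f g i j * (1 / (chi1 j * rho))))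
      = (\<Sum>i<N. \<Sum>j\<in>JJ. dx * dv * (f i j * (rho * chi1 j * M0 (g i) + f i j / rho) * (1 / (chi1 j * rho))))
        + lam / dx * (\<Sum>i<N. \<Sum>j\<in>JJ. dx * dv * ((dl f i j)^2 * (1 / (chi1 j * rho))))"
    by (rule species) (simp add: Bf_def)
  have s2: "(\<Sum>i<N. \<Sum>j\<in>JJ. dx * dv * (g i j * Bg f g i j * (rho / chi2 j)))
      = (\<Sum>i<N. \<Sum>j\<in>JJ. dx * dv * (g i j * (chi2 j * M0 (f i) / rho + rho * g i j) * (rho / chi2 j)))
        + lam / dx * (\<Sum>i<N. \<Sum>j\<in>JJ. dx * dv * ((dl g i j)^2 * (rho / chi2 j)))"
    by (rule species) (simp add: Bg_def)
  have n: "nrm (dl f) (dl g) = (\<Sum>i<N. \<Sum>j\<in>JJ. dx * dv * ((dl f i j)^2 * (1 / (chi1 j * rho))))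
      + (\<Sum>i<N. \<Sum>j\<in>JJ. dx * dv * ((dl g i j)^2 * (rho / chi2 j)))"
    unfolding nrm_def sum.distrib[symmetric] by (intro sum.cong refl) (simp add: distrib_left)
  have c: "SS (\<lambda>i. Dcell (f i) (g i)) = (\<Sum>i<N. \<Sum>j\<in>JJ. dx * dv * (f i j * (rho * chi1 j * M0 (g i) + f i j / rho) * (1 / (chi1 j * rho))))
      + (\<Sum>i<N. \<Sum>j\<in>JJ. dx * dv * (g i j * (chi2 j * M0 (f i) / rho + rho * g i j) * (rho / chi2 j)))"
    unfolding coll_f coll_g SS_def sum.distrib[symmetric] Dcell_def by (intro sum.cong refl) (simp add: algebra_simps)
  show ?thesis unfolding e1 s1 s2 n c by (simp add: algebra_simps)
qed

end


lemma gen_lin: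
  fixes A B C D E K P d l :: real
  shows "(1 / (2 * d)) * A - (1 / (2 * d)) * B - (l / d) * C + (2 * l / d) * D - (l / d) * E + K + P
       = (A - B) / (2 * d) - l / d * (C - 2 * D + E) + K + P"
  by (simp add: diff_divide_distrib right_diff_distrib distrib_left)

context setting begin

lemma M0_Bf: "M0 (Bf f g i) = (M1 (f (nxt N i)) - M1 (f (prv N i))) / (2 * dx)
   - lam / dx * (M0 (f (nxt N i)) - 2 * M0 (f i) + M0 (f (prv N i))) + rho * M0 (g i) + M0 (f i) / rho"
proof -
  have "M0 (Bf f g i) = (\<Sum>j\<in>JJ. (1 / (2 * dx)) * (dv * v j * f (nxt N i) j) - (1 / (2 * dx)) * (dv * v j * f (prv N i) j)
      - (lam / dx) * (dv * f (nxt N i) j) + (2 * lam / dx) * (dv * f i j) - (lam / dx) * (dv * f (prv N i) j)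
      + (rho * M0 (g i)) * (dv * chi1 j) + (1 / rho) * (dv * f i j))"
    unfolding M0_def[of "Bf f g i"] by (intro sum.cong refl) (use dx_pos rho_pos in \<open>simp add: Bf_def field_simps\<close>)
  also have "\<dots> = (1 / (2 * dx)) * M1 (f (nxt N i)) - (1 / (2 * dx)) * M1 (f (prv N i))
      - (lam / dx) * M0 (f (nxt N i)) + (2 * lam / dx) * M0 (f i) - (lam / dx) * M0 (f (prv N i))
      + (rho * M0 (g i)) * M0 chi1 + (1 / rho) * M0 (f i)"
    by (simp only: sum.distrib sum_subtractf sum_distrib_left[symmetric] M0_def M1_def)
  also have "\<dots> = (1 / (2 * dx)) * M1 (f (nxt N i)) - (1 / (2 * dx)) * M1 (f (prv N i))
      - (lam / dx) * M0 (f (nxt N i)) + (2 * lam / dx) * M0 (f i) - (lam / dx) * M0 (f (prv N i))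
      + rho * M0 (g i) + M0 (f i) / rho" using chi1_mass by simp
  finally show ?thesis by (simp only: gen_lin)
qed

lemma M0_Bg: "M0 (Bg f g i) = (M1 (g (nxt N i)) - M1 (g (prv N i))) / (2 * dx)
   - lam / dx * (M0 (g (nxt N i)) - 2 * M0 (g i) + M0 (g (prv N i))) + M0 (f i) / rho + rho * M0 (g i)"
proof -
  have "M0 (Bg f g i) = (\<Sum>j\<in>JJ. (1 / (2 * dx)) * (dv * v j * g (nxt N i) j) - (1 / (2 * dx)) * (dv * v j * g (prv N i) j)
      - (lam / dx) * (dv * g (nxt N i) j) + (2 * lam / dx) * (dv * g i j) - (lam / dx) * (dv * g (prv N i) j)
      + (M0 (f i) / rho) * (dv * chi2 j) + rho * (dv * g i j))"
    unfolding M0_def[of "Bg f g i"] by (intro sum.cong refl) (use dx_pos rho_pos in \<open>simp add: Bg_def field_simps\<close>)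
  also have "\<dots> = (1 / (2 * dx)) * M1 (g (nxt N i)) - (1 / (2 * dx)) * M1 (g (prv N i))
      - (lam / dx) * M0 (g (nxt N i)) + (2 * lam / dx) * M0 (g i) - (lam / dx) * M0 (g (prv N i))
      + (M0 (f i) / rho) * M0 chi2 + rho * M0 (g i)"
    by (simp only: sum.distrib sum_subtractf sum_distrib_left[symmetric] M0_def M1_def)
  also have "\<dots> = (1 / (2 * dx)) * M1 (g (nxt N i)) - (1 / (2 * dx)) * M1 (g (prv N i))
      - (lam / dx) * M0 (g (nxt N i)) + (2 * lam / dx) * M0 (g i) - (lam / dx) * M0 (g (prv N i))
      + M0 (f i) / rho + rho * M0 (g i)" using chi2_mass by simp
  finally show ?thesis by (simp only: gen_lin)
qed

lemma M1_Bf: "M1 (Bf f g i) = (M2 (f (nxt N i)) - M2 (f (prv N i))) / (2 * dx)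
   - lam / dx * (M1 (f (nxt N i)) - 2 * M1 (f i) + M1 (f (prv N i))) + M1 (f i) / rho"
proof -
  have "M1 (Bf f g i) = (\<Sum>j\<in>JJ. (1 / (2 * dx)) * (dv * (v j)^2 * f (nxt N i) j) - (1 / (2 * dx)) * (dv * (v j)^2 * f (prv N i) j)
      - (lam / dx) * (dv * v j * f (nxt N i) j) + (2 * lam / dx) * (dv * v j * f i j) - (lam / dx) * (dv * v j * f (prv N i) j)
      + (rho * M0 (g i)) * (dv * v j * chi1 j) + (1 / rho) * (dv * v j * f i j))"
    unfolding M1_def[of "Bf f g i"] by (intro sum.cong refl) (use dx_pos rho_pos in \<open>simp add: Bf_def field_simps power2_eq_square\<close>)
  also have "\<dots> = (1 / (2 * dx)) * M2 (f (nxt N i)) - (1 / (2 * dx)) * M2 (f (prv N i))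
      - (lam / dx) * M1 (f (nxt N i)) + (2 * lam / dx) * M1 (f i) - (lam / dx) * M1 (f (prv N i))
      + (rho * M0 (g i)) * M1 chi1 + (1 / rho) * M1 (f i)"
    by (simp only: sum.distrib sum_subtractf sum_distrib_left[symmetric] M1_def M2_def)
  also have "\<dots> = (1 / (2 * dx)) * M2 (f (nxt N i)) - (1 / (2 * dx)) * M2 (f (prv N i))
      - (lam / dx) * M1 (f (nxt N i)) + (2 * lam / dx) * M1 (f i) - (lam / dx) * M1 (f (prv N i))
      + 0 + M1 (f i) / rho" using chi1_M1 by simp
  finally show ?thesis by (simp only: gen_lin)
qed

lemma M1_Bg: "M1 (Bg f g i) = (M2 (g (nxt N i)) - M2 (g (prv N i))) / (2 * dx)
   - lam / dx * (M1 (g (nxt N i)) - 2 * M1 (g i) + M1 (g (prv N i))) + rho * M1 (g i)"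
proof -
  have "M1 (Bg f g i) = (\<Sum>j\<in>JJ. (1 / (2 * dx)) * (dv * (v j)^2 * g (nxt N i) j) - (1 / (2 * dx)) * (dv * (v j)^2 * g (prv N i) j)
      - (lam / dx) * (dv * v j * g (nxt N i) j) + (2 * lam / dx) * (dv * v j * g i j) - (lam / dx) * (dv * v j * g (prv N i) j)
      + (M0 (f i) / rho) * (dv * v j * chi2 j) + rho * (dv * v j * g i j))"
    unfolding M1_def[of "Bg f g i"] by (intro sum.cong refl) (use dx_pos rho_pos in \<open>simp add: Bg_def field_simps power2_eq_square\<close>)
  also have "\<dots> = (1 / (2 * dx)) * M2 (g (nxt N i)) - (1 / (2 * dx)) * M2 (g (prv N i))
      - (lam / dx) * M1 (g (nxt N i)) + (2 * lam / dx) * M1 (g i) - (lam / dx) * M1 (g (prv N i))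
      + (M0 (f i) / rho) * M1 chi2 + rho * M1 (g i)"
    by (simp only: sum.distrib sum_subtractf sum_distrib_left[symmetric] M1_def M2_def)
  also have "\<dots> = (1 / (2 * dx)) * M2 (g (nxt N i)) - (1 / (2 * dx)) * M2 (g (prv N i))
      - (lam / dx) * M1 (g (nxt N i)) + (2 * lam / dx) * M1 (g i) - (lam / dx) * M1 (g (prv N i))
      + 0 + rho * M1 (g i)" using chi2_M1 by simp
  finally show ?thesis by (simp only: gen_lin)
qed

end


context setting begin

definition Jc :: "(nat \<Rightarrow> int \<Rightarrow> real) \<Rightarrow> (nat \<Rightarrow> int \<Rightarrow> real) \<Rightarrow> nat \<Rightarrow> real" where
  "Jc f g i = M1 (f i) - M1 (g i)"
definition PP :: "(nat \<Rightarrow> int \<Rightarrow> real) \<Rightarrow> (nat \<Rightarrow> int \<Rightarrow> real) \<Rightarrow> nat \<Rightarrow> real" where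
  "PP f g i = M2 (f i) / D1 - M2 (g i) / D2"
definition WW :: "(nat \<Rightarrow> int \<Rightarrow> real) \<Rightarrow> (nat \<Rightarrow> int \<Rightarrow> real) \<Rightarrow> nat \<Rightarrow> real" where
  "WW f g i = M1 (f i) / (rho * D1) - rho * M1 (g i) / D2"
definition lap :: "(nat \<Rightarrow> real) \<Rightarrow> nat \<Rightarrow> real" where
  "lap \<psi> i = \<psi> (nxt N i) - 2 * \<psi> i + \<psi> (prv N i)"
definition dlt :: "(nat \<Rightarrow> real) \<Rightarrow> nat \<Rightarrow> real" where
  "dlt \<psi> i = \<psi> (nxt N i) - \<psi> i"
definition psiB :: "(nat \<Rightarrow> int \<Rightarrow> real) \<Rightarrow> (nat \<Rightarrow> int \<Rightarrow> real) \<Rightarrow> (nat \<Rightarrow> real) \<Rightarrow> nat \<Rightarrow> real" where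
  "psiB f g \<psi> i = Jc f g i - avg (Jc f g) - lam / dx * lap \<psi> i"

lemma mm_B: "mm (Bf f g) (Bg f g) i = (Jc f g (nxt N i) - Jc f g (prv N i)) / (2 * dx) - lam / dx * lap (mm f g) i"
  unfolding mm_def M0_Bf M0_Bg Jc_def lap_def by (simp add: algebra_simps diff_divide_distrib add_divide_distrib)

lemma YY_B: "YY (Bf f g) (Bg f g) i = (PP f g (nxt N i) - PP f g (prv N i)) / (2 * dx) - lam / dx * lap (YY f g) i + WW f g i"
  unfolding YY_def M1_Bf M1_Bg PP_def lap_def WW_def
  by (simp add: algebra_simps diff_divide_distrib add_divide_distrib)

lemma M0_diff: "M0 (\<lambda>j. a j - b j) = M0 a - M0 b" by (simp add: M0_def algebra_simps sum_subtractf)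
lemma M1_diff: "M1 (\<lambda>j. a j - b j) = M1 a - M1 b" by (simp add: M1_def algebra_simps sum_subtractf)

lemma mm_dl: "mm (dl f) (dl g) i = dlt (mm f g) i"
  unfolding mm_def dl_def dlt_def M0_diff by simp
lemma YY_dl: "YY (dl f) (dl g) i = dlt (YY f g) i"
  unfolding YY_def dl_def dlt_def M1_diff by (simp add: diff_divide_distrib)

lemma sum_dlt: "(\<Sum>i<N. dlt u i) = 0"
  unfolding dlt_def by (simp add: sum_subtractf sum_nxt)
lemma sum_lap: "(\<Sum>i<N. lap u i) = 0"
  unfolding lap_def by (simp add: sum.distrib sum_subtractf sum_nxt sum_prv sum_distrib_left[symmetric])
lemma sum_cdiff: "(\<Sum>i<N. u (nxt N i) - u (prv N i)) = (0::real)"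
  by (simp add: sum_subtractf sum_nxt sum_prv)
lemma avg_dlt: "avg (dlt u) = 0" by (simp add: avg_def sum_dlt)

lemma psirel_dl:
  assumes "psirel (mm f g) \<psi>"
  shows "psirel (mm (dl f) (dl g)) (dlt \<psi>)"
proof -
  have rel: "\<And>i. i < N \<Longrightarrow> \<psi> (nxt N i) - \<psi> (prv N i) = 2 * dx * (mm f g i - avg (mm f g))"
    using assms by (auto simp: psirel_def)
  show ?thesis unfolding psirel_def
  proof (intro conjI allI impI)
    fix i assume i: "i < N"
    have n: "nxt N i < N" and p: "prv N i < N" using N_pos by (auto simp: nxt_lt prv_lt)
    have "dlt \<psi> (nxt N i) - dlt \<psi> (prv N i) = (\<psi> (nxt N (nxt N i)) - \<psi> (prv N (nxt N i))) - (\<psi> (nxt N i) - \<psi> (prv N i))"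
      unfolding dlt_def using i by (simp add: prv_nxt nxt_prv)
    also have "\<dots> = 2 * dx * (mm f g (nxt N i) - avg (mm f g)) - 2 * dx * (mm f g i - avg (mm f g))"
      using rel[OF n] rel[OF i] by simp
    also have "\<dots> = 2 * dx * (mm (dl f) (dl g) i - avg (mm (dl f) (dl g)))"
      unfolding mm_dl avg_dlt[of "mm f g", folded mm_dl[abs_def]]
      by (simp add: dlt_def algebra_simps)
    finally show "dlt \<psi> (nxt N i) - dlt \<psi> (prv N i) = 2 * dx * (mm (dl f) (dl g) i - avg (mm (dl f) (dl g)))" .
  next
    show "(\<Sum>i<N. dlt \<psi> i) = 0" by (rule sum_dlt)
  qed
qed

end


context setting begin

lemma avg_mmB: "avg (mm (Bf f g) (Bg f g)) = 0"
proof -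
  have "(\<Sum>i<N. mm (Bf f g) (Bg f g) i) = (\<Sum>i<N. Jc f g (nxt N i) - Jc f g (prv N i)) / (2 * dx) - lam / dx * (\<Sum>i<N. lap (mm f g) i)"
    unfolding mm_B by (simp add: sum_subtractf sum_divide_distrib[symmetric] sum_distrib_left)
  also have "\<dots> = 0" by (simp add: sum_cdiff sum_lap)
  finally show ?thesis by (simp add: avg_def)
qed

lemma psirel_B:
  assumes "psirel (mm f g) \<psi>"
  shows "psirel (mm (Bf f g) (Bg f g)) (psiB f g \<psi>)"
proof -
  have rel: "\<And>i. i < N \<Longrightarrow> \<psi> (nxt N i) - \<psi> (prv N i) = 2 * dx * (mm f g i - avg (mm f g))"
    using assms by (auto simp: psirel_def)
  show ?thesis unfolding psirel_def
  proof (intro conjI allI impI)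
    fix i assume i: "i < N"
    have n: "nxt N i < N" and p: "prv N i < N" using N_pos by (auto simp: nxt_lt prv_lt)
    have "lap \<psi> (nxt N i) - lap \<psi> (prv N i)
        = (\<psi> (nxt N (nxt N i)) - \<psi> (prv N (nxt N i))) - 2 * (\<psi> (nxt N i) - \<psi> (prv N i)) + (\<psi> (nxt N (prv N i)) - \<psi> (prv N (prv N i)))"
      unfolding lap_def using i by (simp add: prv_nxt nxt_prv)
    also have "\<dots> = 2 * dx * lap (mm f g) i"
      using rel[OF n] rel[OF i] rel[OF p] by (simp add: lap_def algebra_simps)
    finally have L: "lap \<psi> (nxt N i) - lap \<psi> (prv N i) = 2 * dx * lap (mm f g) i" .
    have "psiB f g \<psi> (nxt N i) - psiB f g \<psi> (prv N i)
        = (Jc f g (nxt N i) - Jc f g (prv N i)) - lam / dx * (lap \<psi> (nxt N i) - lap \<psi> (prv N i))"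
      unfolding psiB_def by (simp add: algebra_simps)
    also have "\<dots> = 2 * dx * (mm (Bf f g) (Bg f g) i - avg (mm (Bf f g) (Bg f g)))"
      unfolding L avg_mmB mm_B using dx_pos by (simp add: field_simps)
    finally show "psiB f g \<psi> (nxt N i) - psiB f g \<psi> (prv N i) = 2 * dx * (mm (Bf f g) (Bg f g) i - avg (mm (Bf f g) (Bg f g)))" .
  next
    have "(\<Sum>i<N. psiB f g \<psi> i) = (\<Sum>i<N. Jc f g i) - real N * avg (Jc f g) - lam / dx * (\<Sum>i<N. lap \<psi> i)"
      unfolding psiB_def by (simp add: sum_subtractf sum_distrib_left)
    also have "\<dots> = 0" using N_pos by (simp add: sum_lap avg_def)
    finally show "(\<Sum>i<N. psiB f g \<psi> i) = 0" .
  qed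
qed

lemma sum_lap_mult: "(\<Sum>i<N. a i * lap b i) = - (\<Sum>i<N. dlt a i * dlt b i)"
  unfolding lap_def dlt_def by (rule sbp_lap)

lemma key_identity:
  assumes rel: "psirel (mm f g) \<psi>"
  shows "ip f g (Bf f g) (Bg f g) - e * (SS (\<lambda>i. YY f g i * psiB f g \<psi> i) + SS (\<lambda>i. YY (Bf f g) (Bg f g) i * \<psi> i))
    = SS (\<lambda>i. Dcell (f i) (g i)) + lam / dx * Hq e (dl f) (dl g) (dlt \<psi>)
      - e * SS (\<lambda>i. YY f g i * (Jc f g i - avg (Jc f g))) + e * SS (\<lambda>i. PP f g i * (mm f g i - avg (mm f g)))
      - e * SS (\<lambda>i. WW f g i * \<psi> i)"
proof -
  have rl: "\<And>i. i < N \<Longrightarrow> \<psi> (nxt N i) - \<psi> (prv N i) = 2 * dx * (mm f g i - avg (mm f g))"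
    using rel by (auto simp: psirel_def)
  define Z where "Z = SS (\<lambda>i. dlt (YY f g) i * dlt \<psi> i)"
  have 1: "SS (\<lambda>i. YY f g i * psiB f g \<psi> i) = SS (\<lambda>i. YY f g i * (Jc f g i - avg (Jc f g))) + lam / dx * Z"
  proof -
    have "SS (\<lambda>i. YY f g i * psiB f g \<psi> i) = SS (\<lambda>i. YY f g i * (Jc f g i - avg (Jc f g))) - lam / dx * (dx * (\<Sum>i<N. YY f g i * lap \<psi> i))"
      unfolding SS_def psiB_def using dx_pos by (simp add: algebra_simps sum_subtractf sum_distrib_left sum.distrib)
    also have "dx * (\<Sum>i<N. YY f g i * lap \<psi> i) = - Z" unfolding sum_lap_mult Z_def SS_def by (simp add: sum_distrib_left)
    finally show ?thesis by simp
  qed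
  have 2: "SS (\<lambda>i. YY (Bf f g) (Bg f g) i * \<psi> i)
      = - SS (\<lambda>i. PP f g i * (mm f g i - avg (mm f g))) + lam / dx * Z + SS (\<lambda>i. WW f g i * \<psi> i)"
  proof -
    have a: "SS (\<lambda>i. YY (Bf f g) (Bg f g) i * \<psi> i)
       = (1 / 2) * (\<Sum>i<N. \<psi> i * (PP f g (nxt N i) - PP f g (prv N i))) - lam / dx * (dx * (\<Sum>i<N. \<psi> i * lap (YY f g) i))
         + SS (\<lambda>i. WW f g i * \<psi> i)"
    proof -
      have pt: "dx * (YY (Bf f g) (Bg f g) i * \<psi> i) = (1 / 2) * (\<psi> i * (PP f g (nxt N i) - PP f g (prv N i)))
          - lam / dx * (dx * (\<psi> i * lap (YY f g) i)) + dx * (WW f g i * \<psi> i)" for i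
        unfolding YY_B using dx_pos by (simp add: field_simps)
      show ?thesis unfolding SS_def pt
        by (simp only: sum.distrib sum_subtractf sum_distrib_left[symmetric])
    qed
    have b: "(\<Sum>i<N. \<psi> i * (PP f g (nxt N i) - PP f g (prv N i))) = - 2 * SS (\<lambda>i. PP f g i * (mm f g i - avg (mm f g)))"
    proof -
      have "(\<Sum>i<N. \<psi> i * (PP f g (nxt N i) - PP f g (prv N i))) = - (\<Sum>i<N. (\<psi> (nxt N i) - \<psi> (prv N i)) * PP f g i)"
        by (rule sbp_c)
      also have "\<dots> = - (\<Sum>i<N. 2 * (dx * (PP f g i * (mm f g i - avg (mm f g)))))"
        by (intro arg_cong[where f=uminus] sum.cong refl) (simp add: rl)
      also have "\<dots> = - 2 * SS (\<lambda>i. PP f g i * (mm f g i - avg (mm f g)))"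
        by (simp only: SS_def sum_distrib_left mult.assoc) (simp add: sum_negf)
      finally show ?thesis .
    qed
    have c: "dx * (\<Sum>i<N. \<psi> i * lap (YY f g) i) = - Z"
      unfolding sum_lap_mult Z_def SS_def by (simp add: sum_distrib_left mult_ac)
    show ?thesis unfolding a b c by simp
  qed
  have 3: "Hq e (dl f) (dl g) (dlt \<psi>) = nrm (dl f) (dl g) - 2 * e * Z"
    unfolding Hq_def Z_def YY_dl by simp
  show ?thesis unfolding energy 1 2 3 by (simp add: algebra_simps)
qed

end


context setting begin

abbreviation "GG \<equiv> Gam rho vstar Dm"
abbreviation "Mi a b \<equiv> mic1 a + mic2 b"

lemma Gam_parts:
  "2 / Dm \<le> GG" "2 * vstar^2 \<le> GG" "2 * vstar^4 / Dm^2 \<le> GG" "2 * (rho^2 + 1 / rho^2) / Dm \<le> GG"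
  using Dm_pos rho_pos unfolding Gam_def by (auto intro!: add_nonneg_nonneg divide_nonneg_pos)

lemma Gam_pos: "GG > 0" using Gam_parts(1) Dm_pos by (smt (verit) divide_pos_pos)

lemma Mi_nonneg: "Mi a b \<ge> 0" using mic1_nonneg mic2_nonneg by (simp add: add_nonneg_nonneg)

lemma leGam: "x \<le> c * Mi a b \<Longrightarrow> c \<le> GG \<Longrightarrow> x \<le> GG * Mi a b"
  using mult_right_mono[of c GG "Mi a b"] Mi_nonneg[of a b] by linarith

lemma cY: "(M1 a / D1 - M1 b / D2)^2 \<le> GG * Mi a b"
  using cell_Y Gam_parts(1) by (rule leGam)

lemma cJ: "(M1 a - M1 b)^2 \<le> GG * Mi a b"
proof -
  have "(M1 a - M1 b)^2 \<le> 2 * (M1 a)^2 + 2 * (M1 b)^2" by (rule diff_sq_le)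
  also have "(M1 a)^2 \<le> vstar^2 * mic1 a"
    using M1_mic1[of a] mult_right_mono[OF D1_le mic1_nonneg[of a]] by linarith
  also have "(M1 b)^2 \<le> vstar^2 * mic2 b"
    using M1_mic2[of b] mult_right_mono[OF D2_le mic2_nonneg[of b]] by linarith
  finally have "(M1 a - M1 b)^2 \<le> (2 * vstar^2) * Mi a b" by (simp add: algebra_simps)
  then show ?thesis using Gam_parts(2) by (rule leGam)
qed

lemma cR: "(M2 a / D1 - M2 b / D2 - (M0 a - M0 b))^2 \<le> GG * Mi a b"
proof -
  have e: "M2 a / D1 - M2 b / D2 - (M0 a - M0 b) = (M2 a - D1 * M0 a) / D1 - (M2 b - D2 * M0 b) / D2"
    using D1_pos D2_pos by (simp add: field_simps)
  have a: "((M2 a - D1 * M0 a) / D1)^2 \<le> vstar^4 / Dm^2 * mic1 a"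
  proof -
    have "((M2 a - D1 * M0 a) / D1)^2 = (M2 a - D1 * M0 a)^2 / D1^2" by (simp add: power_divide)
    also have "\<dots> \<le> vstar^4 * mic1 a / D1^2" using M2_mic1[of a] by (intro divide_right_mono) auto
    also have "\<dots> \<le> vstar^4 * mic1 a / Dm^2"
      using D1_ge Dm_pos mic1_nonneg[of a] by (intro divide_left_mono power_mono mult_nonneg_nonneg) auto
    finally show ?thesis by simp
  qed
  have b: "((M2 b - D2 * M0 b) / D2)^2 \<le> vstar^4 / Dm^2 * mic2 b"
  proof -
    have "((M2 b - D2 * M0 b) / D2)^2 = (M2 b - D2 * M0 b)^2 / D2^2" by (simp add: power_divide)
    also have "\<dots> \<le> vstar^4 * mic2 b / D2^2" using M2_mic2[of b] by (intro divide_right_mono) auto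
    also have "\<dots> \<le> vstar^4 * mic2 b / Dm^2"
      using D2_ge Dm_pos mic2_nonneg[of b] by (intro divide_left_mono power_mono mult_nonneg_nonneg) auto
    finally show ?thesis by simp
  qed
  have "(M2 a / D1 - M2 b / D2 - (M0 a - M0 b))^2 \<le> 2 * ((M2 a - D1 * M0 a) / D1)^2 + 2 * ((M2 b - D2 * M0 b) / D2)^2"
    unfolding e by (rule diff_sq_le)
  also have "\<dots> \<le> 2 * (vstar^4 / Dm^2 * mic1 a) + 2 * (vstar^4 / Dm^2 * mic2 b)" using a b by linarith
  also have "\<dots> = (2 * vstar^4 / Dm^2) * Mi a b" by (simp add: algebra_simps add_divide_distrib)
  finally show ?thesis using Gam_parts(3) by (rule leGam)
qed

lemma cW: "(M1 a / (rho * D1) - rho * M1 b / D2)^2 \<le> GG * Mi a b"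
proof -
  have a: "(M1 a / (rho * D1))^2 \<le> (1 / rho^2) * (mic1 a / Dm)"
  proof -
    have "(M1 a / (rho * D1))^2 = (1 / rho^2) * (M1 a / D1)^2" by (simp add: power_divide power_mult_distrib)
    also have "\<dots> \<le> (1 / rho^2) * (mic1 a / Dm)" using M1sq_le1[of a] by (intro mult_left_mono) auto
    finally show ?thesis .
  qed
  have b: "(rho * M1 b / D2)^2 \<le> rho^2 * (mic2 b / Dm)"
  proof -
    have "(rho * M1 b / D2)^2 = rho^2 * (M1 b / D2)^2" by (simp add: power_divide power_mult_distrib)
    also have "\<dots> \<le> rho^2 * (mic2 b / Dm)" using M1sq_le2[of b] by (intro mult_left_mono) auto
    finally show ?thesis .
  qed
  have "(M1 a / (rho * D1) - rho * M1 b / D2)^2 \<le> 2 * (M1 a / (rho * D1))^2 + 2 * (rho * M1 b / D2)^2"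
    by (rule diff_sq_le)
  also have "\<dots> \<le> 2 * ((1 / rho^2) * (mic1 a / Dm)) + 2 * (rho^2 * (mic2 b / Dm))" using a b by linarith
  also have "\<dots> \<le> (2 * (rho^2 + 1 / rho^2) / Dm) * Mi a b"
  proof -
    have "(2 * (rho^2 + 1 / rho^2) / Dm) * Mi a b - (2 * ((1 / rho^2) * (mic1 a / Dm)) + 2 * (rho^2 * (mic2 b / Dm)))
        = (2 / Dm) * (rho^2 * mic1 a + (1 / rho^2) * mic2 b)"
      using Dm_pos rho_pos by (simp add: field_simps)
    moreover have "(2 / Dm) * (rho^2 * mic1 a + (1 / rho^2) * mic2 b) \<ge> 0"
      using Dm_pos mic1_nonneg[of a] mic2_nonneg[of b] by (intro mult_nonneg_nonneg add_nonneg_nonneg) auto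
    ultimately show ?thesis by linarith
  qed
  finally show ?thesis using Gam_parts(4) by (rule leGam)
qed

lemma EE_micro1: "EE chi1 a = mic1 a + (M0 a)^2" by (simp add: micro_def[OF chi1_ok Dlo1_pos])
lemma EE_micro2: "EE chi2 a = mic2 a + (M0 a)^2" by (simp add: micro_def[OF chi2_ok Dlo2_pos])

lemma czero_pos: "czero rho > 0" using rho_pos by (simp add: czero_def)

lemma cDcell: "Dcell a b \<ge> czero rho * Mi a b + (M0 a / rho + rho * M0 b)^2"
proof -
  have e: "Dcell a b = mic1 a / rho^2 + rho^2 * mic2 b + (M0 a / rho + rho * M0 b)^2"
    unfolding Dcell_def EE_micro1 EE_micro2 using rho_pos by (simp add: field_simps power2_eq_square)
  have 1: "czero rho * mic1 a \<le> mic1 a / rho^2"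
    using mic1_nonneg[of a] mult_right_mono[of "czero rho" "1 / rho^2" "mic1 a"] by (simp add: czero_def)
  have 2: "czero rho * mic2 b \<le> rho^2 * mic2 b"
    using mic2_nonneg[of b] mult_right_mono[of "czero rho" "rho^2" "mic2 b"] by (simp add: czero_def)
  show ?thesis unfolding e using 1 2 by (simp add: algebra_simps)
qed

lemma cone_ge1: "cone rho \<ge> 1"
proof -
  have "rho + 1 / rho - 2 = (rho - 1)^2 / rho" using rho_pos by (simp add: field_simps power2_eq_square)
  moreover have "(rho - 1)^2 / rho \<ge> 0" using rho_pos by simp
  ultimately show ?thesis unfolding cone_def by linarith
qed

lemma cNorm: "EE chi1 a / rho + rho * EE chi2 b \<le> cone rho * Mi a b + (M0 a - M0 b)^2 + (M0 a / rho + rho * M0 b)^2"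
proof -
  define x y where "x = M0 a" and "y = M0 b"
  have id: "cone rho * ((M0 a)^2 / rho + rho * (M0 b)^2) = (M0 a - M0 b)^2 + (M0 a / rho + rho * M0 b)^2"
    unfolding cone_def using rho_pos by (simp add: field_simps power2_eq_square)
  have q0: "(M0 a)^2 / rho + rho * (M0 b)^2 \<ge> 0" using rho_pos by simp
  have q: "(M0 a)^2 / rho + rho * (M0 b)^2 \<le> (M0 a - M0 b)^2 + (M0 a / rho + rho * M0 b)^2"
    using id mult_right_mono[OF cone_ge1 q0] by simp
  have m1: "mic1 a / rho \<le> cone rho * mic1 a"
  proof -
    have "cone rho * mic1 a - mic1 a / rho = rho * mic1 a" using rho_pos by (simp add: cone_def field_simps)
    then show ?thesis using rho_pos mic1_nonneg[of a] by (smt (verit) mult_nonneg_nonneg)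
  qed
  have m2: "rho * mic2 b \<le> cone rho * mic2 b"
  proof -
    have "cone rho * mic2 b - rho * mic2 b = mic2 b / rho" using rho_pos by (simp add: cone_def field_simps)
    then show ?thesis using rho_pos mic2_nonneg[of b] by (smt (verit) divide_nonneg_pos)
  qed
  show ?thesis unfolding EE_micro1 EE_micro2 using q m1 m2 by (simp add: algebra_simps add_divide_distrib)
qed

end


context setting begin

lemma SS_lin4: "SS (\<lambda>i. A i - e * B i + e * C i - e * D i) = SS A - e * SS B + e * SS C - e * SS D"
  by (simp only: SS_diff SS_add SS_cmult)
lemma SS_lin5: "SS (\<lambda>i. c1 * A i + B i + c2 * C i - c3 * D i - c4 * E i) = c1 * SS A + SS B + c2 * SS C - c3 * SS D - c4 * SS E"
  by (simp only: SS_diff SS_add SS_cmult)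
lemma SS_lin3: "SS (\<lambda>i. c1 * A i + B i + c2 * C i) = c1 * SS A + SS B + c2 * SS C"
  by (simp only: SS_diff SS_add SS_cmult)

lemma pw_ineq:
  fixes Dc Y J' P m W p M s e G c0 l :: real
  assumes e0: "0 \<le> e" and l: "l > 0"
    and hD: "Dc \<ge> c0 * M + s^2"
    and hY: "Y^2 \<le> G * M" and hJ: "True"
    and hR: "(P - m)^2 \<le> G * M" and hW: "W^2 \<le> G * M"
  shows "Dc - e * (Y * J') + e * (P * m) - e * (W * p)
     \<ge> (c0 - e * G * (3/2 + 4 * l^2)) * M + s^2 + (3/4 * e) * m^2 - (e/2) * J'^2 - (e / (16 * l^2)) * p^2"
proof -
  have a0: "2 * (Y * J') \<le> Y^2 + J'^2" using twoab[of Y J'] by (simp add: mult.assoc)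
  have a: "Y * J' \<le> (G * M) / 2 + J'^2 / 2" using a0 hY by linarith
  have b: "P * m \<ge> 3/4 * m^2 - G * M"
  proof -
    have "(P - m + m / 2)^2 \<ge> 0" by simp
    then have "(P - m)^2 + (P - m) * m + m^2 / 4 \<ge> 0" by (simp add: power2_eq_square algebra_simps)
    moreover have "P * m = m^2 + (P - m) * m" by (simp add: power2_eq_square algebra_simps)
    ultimately show ?thesis using hR by linarith
  qed
  have c: "W * p \<le> 4 * l^2 * (G * M) + p^2 / (16 * l^2)"
  proof -
    have "(2 * l * W - p / (4 * l))^2 \<ge> 0" by simp
    moreover have "(2 * l * W - p / (4 * l))^2 = 4 * l^2 * W^2 - W * p + p^2 / (16 * l^2)"
      using l by (simp add: power2_eq_square field_simps)
    moreover have "4 * l^2 * W^2 \<le> 4 * l^2 * (G * M)" using hW by (intro mult_left_mono) auto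
    ultimately show ?thesis by linarith
  qed
  have a': "e * (Y * J') \<le> e * ((G * M) / 2 + J'^2 / 2)" using a e0 by (rule mult_left_mono)
  have b': "e * (3/4 * m^2 - G * M) \<le> e * (P * m)" using b e0 by (rule mult_left_mono)
  have c': "e * (W * p) \<le> e * (4 * l^2 * (G * M) + p^2 / (16 * l^2))" using c e0 by (rule mult_left_mono)
  have eq: "c0 * M + s^2 - e * ((G * M) / 2 + J'^2 / 2) + e * (3/4 * m^2 - G * M) - e * (4 * l^2 * (G * M) + p^2 / (16 * l^2))
     = (c0 - e * G * (3/2 + 4 * l^2)) * M + s^2 + (3/4 * e) * m^2 - (e/2) * J'^2 - (e / (16 * l^2)) * p^2"
    by (simp add: algebra_simps add_divide_distrib diff_divide_distrib)
  show ?thesis using hD a' b' c' eq by linarith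
qed

lemma coercive:
  assumes rel: "psirel (mm f g) \<psi>" and z: "avg (mm f g) = 0"
    and e0: "0 < e" and eH: "e \<le> epsH rho len Dm" and eK: "e \<le> epsK rho len vstar Dm" and e1: "e \<le> 1"
    and k0: "0 \<le> k" and k1: "k \<le> czero rho / (3 * cone rho)" and k2: "k \<le> e / 3"
  shows "k * Hq e f g \<psi> \<le> ip f g (Bf f g) (Bg f g) - e * (SS (\<lambda>i. YY f g i * psiB f g \<psi> i) + SS (\<lambda>i. YY (Bf f g) (Bg f g) i * \<psi> i))"
proof -
  define aJ where "aJ = avg (Jc f g)"
  define sf where "sf i = M0 (f i) / rho + rho * M0 (g i)" for i
  define SM where "SM = SS (\<lambda>i. Mi (f i) (g i))"
  define Ss where "Ss = SS (\<lambda>i. (sf i)^2)"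
  define Sm where "Sm = SS (\<lambda>i. (mm f g i)^2)"
  define SJ where "SJ = SS (\<lambda>i. (Jc f g i - aJ)^2)"
  define Sp where "Sp = SS (\<lambda>i. (\<psi> i)^2)"
  define c1 where "c1 = czero rho - e * GG * (3/2 + 4 * len^2)"
  have SM0: "SM \<ge> 0" unfolding SM_def using Mi_nonneg by (intro SS_nonneg) auto
  have Ss0: "Ss \<ge> 0" unfolding Ss_def by (intro SS_nonneg) auto
  have Sm0: "Sm \<ge> 0" unfolding Sm_def by (intro SS_nonneg) auto
  have Hd: "Hq e (dl f) (dl g) (dlt \<psi>) \<ge> 0"
    using Hpos[OF psirel_dl[OF rel] less_imp_le[OF e0] eH] nrm_nonneg[of "dl f" "dl g"] by linarith
  have ld: "lam / dx * Hq e (dl f) (dl g) (dlt \<psi>) \<ge> 0" using lam_pos dx_pos Hd by simp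
  have pw: "Dcell (f i) (g i) - e * (YY f g i * (Jc f g i - aJ)) + e * (PP f g i * mm f g i) - e * (WW f g i * \<psi> i)
     \<ge> c1 * Mi (f i) (g i) + (sf i)^2 + (3/4 * e) * (mm f g i)^2 - (e/2) * (Jc f g i - aJ)^2 - (e / (16 * len^2)) * (\<psi> i)^2" for i
    unfolding c1_def
  proof (rule pw_ineq)
    show "0 \<le> e" using e0 by simp
    show "len > 0" by (rule len_pos)
    show "czero rho * Mi (f i) (g i) + (sf i)^2 \<le> Dcell (f i) (g i)" unfolding sf_def by (rule cDcell)
    show "(YY f g i)^2 \<le> GG * Mi (f i) (g i)" unfolding YY_def by (rule cY)
    show "(PP f g i - mm f g i)^2 \<le> GG * Mi (f i) (g i)" unfolding PP_def mm_def by (rule cR)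
    show "(WW f g i)^2 \<le> GG * Mi (f i) (g i)" unfolding WW_def by (rule cW)
  qed simp
  have sumL: "SS (\<lambda>i. Dcell (f i) (g i)) - e * SS (\<lambda>i. YY f g i * (Jc f g i - aJ)) + e * SS (\<lambda>i. PP f g i * mm f g i) - e * SS (\<lambda>i. WW f g i * \<psi> i)
     \<ge> c1 * SM + Ss + (3/4 * e) * Sm - (e/2) * SJ - (e / (16 * len^2)) * Sp"
  proof -
    have "SS (\<lambda>i. c1 * Mi (f i) (g i) + (sf i)^2 + (3/4 * e) * (mm f g i)^2 - (e/2) * (Jc f g i - aJ)^2 - (e / (16 * len^2)) * (\<psi> i)^2)
       \<le> SS (\<lambda>i. Dcell (f i) (g i) - e * (YY f g i * (Jc f g i - aJ)) + e * (PP f g i * mm f g i) - e * (WW f g i * \<psi> i))"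
      by (rule SS_mono) (rule pw)
    then show ?thesis unfolding SS_lin4 SS_lin5 SM_def Ss_def Sm_def SJ_def Sp_def .
  qed
  have SJb: "SJ \<le> GG * SM"
  proof -
    have "SJ = dx * (\<Sum>i<N. (Jc f g i - avg (Jc f g))^2)" by (simp add: SJ_def SS_def aJ_def sum_distrib_left)
    also have "\<dots> \<le> dx * (\<Sum>i<N. (Jc f g i)^2)" using dx_pos var_le by (intro mult_left_mono) auto
    also have "\<dots> = SS (\<lambda>i. (Jc f g i)^2)" by (simp add: SS_def sum_distrib_left)
    also have "\<dots> \<le> SS (\<lambda>i. GG * Mi (f i) (g i))" unfolding Jc_def by (rule SS_mono) (rule cJ)
    also have "\<dots> = GG * SM" by (simp add: SS_cmult SM_def)
    finally show ?thesis .
  qed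
  have Spb: "Sp \<le> 4 * len^2 * Sm" unfolding Sp_def Sm_def by (rule psi_bound[OF rel])
  have t1: "(e/2) * SJ \<le> (e/2) * (GG * SM)" using SJb e0 by (intro mult_left_mono) auto
  have t2: "(e / (16 * len^2)) * Sp \<le> (e / (16 * len^2)) * (4 * len^2 * Sm)" using Spb e0 by (intro mult_left_mono) auto
  have t2': "(e / (16 * len^2)) * (4 * len^2 * Sm) = (e/4) * Sm" using len_pos by (simp add: field_simps)
  have eK': "e * GG * (2 + 4 * len^2) \<le> czero rho / 2"
  proof -
    have pos: "2 * (2 + 4 * len^2) * GG > 0" using Gam_pos by (intro mult_pos_pos add_pos_nonneg) auto
    have "e * (2 * (2 + 4 * len^2) * GG) \<le> czero rho" using eK pos unfolding epsK_def by (simp add: pos_le_divide_eq)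
    then show ?thesis by (simp add: algebra_simps)
  qed
  have t3: "(c1 - (e/2) * GG) * SM \<ge> (czero rho / 2) * SM"
  proof (rule mult_right_mono[OF _ SM0])
    show "czero rho / 2 \<le> c1 - e / 2 * GG" using eK' unfolding c1_def by (simp add: algebra_simps)
  qed
  have low: "SS (\<lambda>i. Dcell (f i) (g i)) - e * SS (\<lambda>i. YY f g i * (Jc f g i - aJ)) + e * SS (\<lambda>i. PP f g i * mm f g i) - e * SS (\<lambda>i. WW f g i * \<psi> i)
     \<ge> (czero rho / 2) * SM + Ss + (e/2) * Sm"
  proof -
    have "(c1 - (e/2) * GG) * SM = c1 * SM - (e/2) * (GG * SM)" by (simp add: algebra_simps)
    then show ?thesis using sumL t1 t2 t2' t3 by linarith
  qed
  have nb: "nrm f g \<le> cone rho * SM + Sm + Ss"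
  proof -
    have "nrm f g \<le> SS (\<lambda>i. cone rho * Mi (f i) (g i) + (mm f g i)^2 + (sf i)^2)"
      unfolding nrm_cell mm_def sf_def by (rule SS_mono) (rule cNorm)
    also have "\<dots> = cone rho * SM + Sm + Ss"
      using SS_lin3[of "cone rho" "\<lambda>i. Mi (f i) (g i)" "\<lambda>i. (mm f g i)^2" 1 "\<lambda>i. (sf i)^2"]
      by (simp add: SM_def Sm_def Ss_def add.commute add.left_commute)
    finally show ?thesis .
  qed
  have up: "k * Hq e f g \<psi> \<le> (czero rho / 2) * SM + Ss + (e/2) * Sm"
  proof -
    have "k * Hq e f g \<psi> \<le> k * (3/2 * nrm f g)"
      using Hpos[OF rel less_imp_le[OF e0] eH] k0 by (intro mult_left_mono) auto
    also have "\<dots> \<le> k * (3/2 * (cone rho * SM + Sm + Ss))" using nb k0 by (intro mult_left_mono) auto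
    also have "\<dots> = (k * 3/2 * cone rho) * SM + (k * 3/2) * Sm + (k * 3/2) * Ss" by (simp add: algebra_simps)
    also have "\<dots> \<le> (czero rho / 2) * SM + (e/2) * Sm + 1 * Ss"
    proof (intro add_mono mult_right_mono SM0 Sm0 Ss0)
      show "k * 3 / 2 * cone rho \<le> czero rho / 2"
        using k1 cone_pos by (simp add: le_divide_eq mult.commute)
      show "k * 3 / 2 \<le> e / 2" using k2 by simp
      show "k * 3 / 2 \<le> 1" using k2 e1 by simp
    qed
    finally show ?thesis by simp
  qed
  show ?thesis
    unfolding key_identity[OF rel] z using low up ld unfolding aJ_def by simp
qed

end


context setting begin

lemma M0_lin: "M0 (\<lambda>j. a j + t * b j) = M0 a + t * M0 b"
  by (simp add: M0_def algebra_simps sum.distrib sum_distrib_left)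
lemma M1_lin: "M1 (\<lambda>j. a j + t * b j) = M1 a + t * M1 b"
  by (simp add: M1_def algebra_simps sum.distrib sum_distrib_left)

definition lc :: "(nat \<Rightarrow> int \<Rightarrow> real) \<Rightarrow> real \<Rightarrow> (nat \<Rightarrow> int \<Rightarrow> real) \<Rightarrow> nat \<Rightarrow> int \<Rightarrow> real" where
  "lc a t b i j = a i j + t * b i j"

lemma mm_lc: "mm (lc f t f2) (lc g t g2) i = mm f g i + t * mm f2 g2 i"
  unfolding mm_def lc_def M0_lin by (simp add: algebra_simps)
lemma YY_lc: "YY (lc f t f2) (lc g t g2) i = YY f g i + t * YY f2 g2 i"
  unfolding YY_def lc_def M1_lin by (simp add: algebra_simps add_divide_distrib)

lemma sq_lc: "((a::real) + t * b)^2 * w = a^2 * w + 2 * t * (a * b * w) + t^2 * (b^2 * w)"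
  by (simp add: power2_eq_square algebra_simps)

lemma nrm_lc: "nrm (lc f t f2) (lc g t g2) = nrm f g + 2 * t * ip f g f2 g2 + t^2 * nrm f2 g2"
proof -
  define w1 where "w1 j = 1 / (chi1 j * rho)" for j
  define w2 where "w2 j = rho / chi2 j" for j
  have nf: "nrm f g = (\<Sum>i<N. \<Sum>j\<in>JJ. dx * dv * ((f i j)^2 * w1 j + (g i j)^2 * w2 j))" for f g
    unfolding nrm_def w1_def w2_def by simp
  have ipf: "ip f g f2 g2 = (\<Sum>i<N. \<Sum>j\<in>JJ. dx * dv * (f i j * f2 i j * w1 j + g i j * g2 i j * w2 j))"
    unfolding ip_def w1_def w2_def by simp
  have pt: "dx * dv * ((lc f t f2 i j)^2 * w1 j + (lc g t g2 i j)^2 * w2 j)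
     = dx * dv * ((f i j)^2 * w1 j + (g i j)^2 * w2 j)
       + 2 * t * (dx * dv * (f i j * f2 i j * w1 j + g i j * g2 i j * w2 j))
       + t^2 * (dx * dv * ((f2 i j)^2 * w1 j + (g2 i j)^2 * w2 j))" for i j
    unfolding lc_def sq_lc by (simp add: algebra_simps)
  show ?thesis unfolding nf ipf pt
    by (simp only: sum.distrib sum_distrib_left[symmetric])
qed

lemma Hq_lc: "Hq e (lc f t f2) (lc g t g2) (\<lambda>i. p1 i + t * p2 i)
   = Hq e f g p1 + 2 * t * (ip f g f2 g2 - e * (SS (\<lambda>i. YY f g i * p2 i) + SS (\<lambda>i. YY f2 g2 i * p1 i)))
     + t^2 * Hq e f2 g2 p2"
proof -
  have pt: "dx * (YY (lc f t f2) (lc g t g2) i * (p1 i + t * p2 i))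
     = dx * (YY f g i * p1 i) + t * (dx * (YY f g i * p2 i) + dx * (YY f2 g2 i * p1 i)) + t^2 * (dx * (YY f2 g2 i * p2 i))" for i
    unfolding YY_lc by (simp add: algebra_simps power2_eq_square)
  have "SS (\<lambda>i. YY (lc f t f2) (lc g t g2) i * (p1 i + t * p2 i))
     = SS (\<lambda>i. YY f g i * p1 i) + t * (SS (\<lambda>i. YY f g i * p2 i) + SS (\<lambda>i. YY f2 g2 i * p1 i)) + t^2 * SS (\<lambda>i. YY f2 g2 i * p2 i)"
    unfolding SS_def pt by (simp only: sum.distrib sum_distrib_left[symmetric])
  then show ?thesis unfolding Hq_def nrm_lc by (simp add: algebra_simps)
qed

lemma nrm_cong: "(\<And>i j. i < N \<Longrightarrow> j \<in> JJ \<Longrightarrow> f i j = f' i j) \<Longrightarrow> (\<And>i j. i < N \<Longrightarrow> j \<in> JJ \<Longrightarrow> g i j = g' i j)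
   \<Longrightarrow> nrm f g = nrm f' g'"
  unfolding nrm_def by (intro sum.cong refl) auto
lemma M0_cong: "(\<And>j. j \<in> JJ \<Longrightarrow> a j = b j) \<Longrightarrow> M0 a = M0 b" unfolding M0_def by (intro sum.cong refl) auto
lemma M1_cong: "(\<And>j. j \<in> JJ \<Longrightarrow> a j = b j) \<Longrightarrow> M1 a = M1 b" unfolding M1_def by (intro sum.cong refl) auto

lemma avg_cong: "(\<And>i. i < N \<Longrightarrow> u i = w i) \<Longrightarrow> avg u = avg w"
  unfolding avg_def by (metis lessThan_iff sum.cong)
lemma avg_lin: "avg (\<lambda>i. u i + t * w i) = avg u + t * avg w"
  unfolding avg_def by (simp add: sum.distrib sum_distrib_left add_divide_distrib)

lemma Hq_cong:
  assumes "\<And>i j. i < N \<Longrightarrow> j \<in> JJ \<Longrightarrow> f i j = f' i j" "\<And>i j. i < N \<Longrightarrow> j \<in> JJ \<Longrightarrow> g i j = g' i j"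
    "\<And>i. i < N \<Longrightarrow> p i = p' i"
  shows "Hq e f g p = Hq e f' g' p'"
proof -
  have "YY f g i = YY f' g' i" if i: "i < N" for i
  proof -
    have "M1 (f i) = M1 (f' i)" by (rule M1_cong) (rule assms(1)[OF i])
    moreover have "M1 (g i) = M1 (g' i)" by (rule M1_cong) (rule assms(2)[OF i])
    ultimately show ?thesis unfolding YY_def by simp
  qed
  then have "SS (\<lambda>i. YY f g i * p i) = SS (\<lambda>i. YY f' g' i * p' i)" unfolding SS_def using assms(3) by simp
  then show ?thesis unfolding Hq_def using nrm_cong[OF assms(1,2)] by simp
qed

lemma psirel_cong:
  assumes h: "\<And>i. i < N \<Longrightarrow> u i = w i" shows "psirel u p = psirel w p"
proof -
  have a: "avg u = avg w" by (rule avg_cong[OF h])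
  show ?thesis unfolding psirel_def a using h by (metis)
qed

lemma psirel_lin:
  assumes a: "psirel u p1" and b: "psirel w p2"
  shows "psirel (\<lambda>i. u i + t * w i) (\<lambda>i. p1 i + t * p2 i)"
  unfolding psirel_def avg_lin
proof (intro conjI allI impI)
  fix i assume i: "i < N"
  have 1: "p1 (nxt N i) - p1 (prv N i) = 2 * dx * (u i - avg u)" using a i by (simp add: psirel_def)
  have 2: "p2 (nxt N i) - p2 (prv N i) = 2 * dx * (w i - avg w)" using b i by (simp add: psirel_def)
  have "p1 (nxt N i) + t * p2 (nxt N i) - (p1 (prv N i) + t * p2 (prv N i))
      = (p1 (nxt N i) - p1 (prv N i)) + t * (p2 (nxt N i) - p2 (prv N i))" by (simp add: algebra_simps)
  also have "\<dots> = 2 * dx * (u i + t * w i - (avg u + t * avg w))" unfolding 1 2 by (simp add: algebra_simps)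
  finally show "p1 (nxt N i) + t * p2 (nxt N i) - (p1 (prv N i) + t * p2 (prv N i)) = 2 * dx * (u i + t * w i - (avg u + t * avg w))" .
next
  show "(\<Sum>i<N. p1 i + t * p2 i) = 0" using a b by (simp add: psirel_def sum.distrib sum_distrib_left[symmetric])
qed

lemma step:
  assumes upd_f: "\<And>i j. i < N \<Longrightarrow> j \<in> JJ \<Longrightarrow> f0 i j = f1 i j + dt * Bf f1 g1 i j"
    and upd_g: "\<And>i j. i < N \<Longrightarrow> j \<in> JJ \<Longrightarrow> g0 i j = g1 i j + dt * Bg f1 g1 i j"
    and dt: "dt > 0"
    and r1: "psirel (mm f1 g1) p1" and z: "avg (mm f1 g1) = 0"
    and r0: "psirel (mm f0 g0) p0"
    and e0: "0 < e" and eH: "e \<le> epsH rho len Dm" and eK: "e \<le> epsK rho len vstar Dm" and e1: "e \<le> 1"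
    and k0: "0 \<le> k" and k1: "k \<le> czero rho / (3 * cone rho)" and k2: "k \<le> e / 3"
  shows "(1 + 2 * dt * k) * Hq e f1 g1 p1 \<le> Hq e f0 g0 p0"
proof -
  define pB where "pB = psiB f1 g1 p1"
  have rB: "psirel (mm (Bf f1 g1) (Bg f1 g1)) pB" unfolding pB_def by (rule psirel_B[OF r1])
  have mm0: "mm f0 g0 i = mm f1 g1 i + dt * mm (Bf f1 g1) (Bg f1 g1) i" if "i < N" for i
  proof -
    have "mm f0 g0 i = mm (lc f1 dt (Bf f1 g1)) (lc g1 dt (Bg f1 g1)) i"
    proof -
      have "M0 (f0 i) = M0 (lc f1 dt (Bf f1 g1) i)" by (rule M0_cong) (simp add: lc_def upd_f that)
      moreover have "M0 (g0 i) = M0 (lc g1 dt (Bg f1 g1) i)" by (rule M0_cong) (simp add: lc_def upd_g that)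
      ultimately show ?thesis unfolding mm_def by simp
    qed
    then show ?thesis by (simp add: mm_lc)
  qed
  have rS: "psirel (mm f0 g0) (\<lambda>i. p1 i + dt * pB i)"
    using psirel_lin[OF r1 rB, of dt] psirel_cong[of "mm f0 g0" "\<lambda>i. mm f1 g1 i + dt * mm (Bf f1 g1) (Bg f1 g1) i"] mm0
    by simp
  have peq: "p0 i = p1 i + dt * pB i" if "i < N" for i
  proof (rule unique_anti[OF oddN _ _ _ that])
    fix i assume "i < N"
    then show "p0 (nxt N i) - p0 (prv N i) = (p1 (nxt N i) + dt * pB (nxt N i)) - (p1 (prv N i) + dt * pB (prv N i))"
      using r0 rS by (simp add: psirel_def)
  next
    show "(\<Sum>i<N. p0 i) = 0" using r0 by (simp add: psirel_def)
    show "(\<Sum>i<N. p1 i + dt * pB i) = 0" using rS by (simp add: psirel_def)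
  qed
  have H0: "Hq e f0 g0 p0 = Hq e (lc f1 dt (Bf f1 g1)) (lc g1 dt (Bg f1 g1)) (\<lambda>i. p1 i + dt * pB i)"
    by (rule Hq_cong) (auto simp: lc_def upd_f upd_g peq)
  have co: "k * Hq e f1 g1 p1 \<le> ip f1 g1 (Bf f1 g1) (Bg f1 g1) - e * (SS (\<lambda>i. YY f1 g1 i * pB i) + SS (\<lambda>i. YY (Bf f1 g1) (Bg f1 g1) i * p1 i))"
    unfolding pB_def by (rule coercive[OF r1 z e0 eH eK e1 k0 k1 k2])
  have HB: "Hq e (Bf f1 g1) (Bg f1 g1) pB \<ge> 0"
    using Hpos[OF rB less_imp_le[OF e0] eH] nrm_nonneg[of "Bf f1 g1" "Bg f1 g1"] by linarith
  have "(1 + 2 * dt * k) * Hq e f1 g1 p1 = Hq e f1 g1 p1 + 2 * dt * (k * Hq e f1 g1 p1)" by (simp add: algebra_simps)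
  also have "\<dots> \<le> Hq e f1 g1 p1 + 2 * dt * (ip f1 g1 (Bf f1 g1) (Bg f1 g1) - e * (SS (\<lambda>i. YY f1 g1 i * pB i) + SS (\<lambda>i. YY (Bf f1 g1) (Bg f1 g1) i * p1 i)))"
    using co dt by simp
  also have "\<dots> \<le> Hq e f0 g0 p0"
    unfolding H0 Hq_lc using HB by simp
  finally show ?thesis .
qed

end


context setting begin

lemma dens_M0: "dens L dv h i = M0 (h i)" by (simp add: dens_def M0_def)

lemma LF_diff: "(LF_flux dv lam (v j) (a i j) (a (nxt N i) j) - LF_flux dv lam (v j) (a (prv N i) j) (a i j)) / (dx * dv)
   = v j * (a (nxt N i) j - a (prv N i) j) / (2 * dx) - lam / dx * (a (nxt N i) j - 2 * a i j + a (prv N i) j)"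
  unfolding LF_flux_def using dx_pos dv_pos by (simp add: field_simps)

lemma upd:
  assumes sch: "scheme N L dx dv dt lam rho chi1 chi2 f g" and dt: "dt > 0" and i: "i < N" and j: "j \<in> JJ"
  shows "f n i j = f (Suc n) i j + dt * Bf (f (Suc n)) (g (Suc n)) i j"
    and "g n i j = g (Suc n) i j + dt * Bg (f (Suc n)) (g (Suc n)) i j"
proof -
  have s: "\<forall>n. \<forall>i<N. \<forall>j\<in>JJ.
        (f (Suc n) i j - f n i j) / dt
          + (LF_flux dv lam (vel dv j) (f (Suc n) i j) (f (Suc n) (nxt N i) j)
             - LF_flux dv lam (vel dv j) (f (Suc n) (prv N i) j) (f (Suc n) i j)) / (dx * dv)
        = - rho * chi1 j * dens L dv (g (Suc n)) i - (1 / rho) * f (Suc n) i j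
      \<and>
        (g (Suc n) i j - g n i j) / dt
          + (LF_flux dv lam (vel dv j) (g (Suc n) i j) (g (Suc n) (nxt N i) j)
             - LF_flux dv lam (vel dv j) (g (Suc n) (prv N i) j) (g (Suc n) i j)) / (dx * dv)
        = - (1 / rho) * chi2 j * dens L dv (f (Suc n)) i - rho * g (Suc n) i j"
    using sch unfolding scheme_def .
  note h = s[rule_format, OF i j, of n]
  have ef: "(f (Suc n) i j - f n i j) / dt
          + (v j * (f (Suc n) (nxt N i) j - f (Suc n) (prv N i) j) / (2 * dx) - lam / dx * (f (Suc n) (nxt N i) j - 2 * f (Suc n) i j + f (Suc n) (prv N i) j))
        = - rho * chi1 j * M0 (g (Suc n) i) - (1 / rho) * f (Suc n) i j"
    using conjunct1[OF h] unfolding LF_diff dens_M0 .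
  have eg: "(g (Suc n) i j - g n i j) / dt
          + (v j * (g (Suc n) (nxt N i) j - g (Suc n) (prv N i) j) / (2 * dx) - lam / dx * (g (Suc n) (nxt N i) j - 2 * g (Suc n) i j + g (Suc n) (prv N i) j))
        = - (1 / rho) * chi2 j * M0 (f (Suc n) i) - rho * g (Suc n) i j"
    using conjunct2[OF h] unfolding LF_diff dens_M0 .
  show "f n i j = f (Suc n) i j + dt * Bf (f (Suc n)) (g (Suc n)) i j"
  proof -
    have "f n i j = f (Suc n) i j + dt * ((f n i j - f (Suc n) i j) / dt)" using dt by simp
    also have "(f n i j - f (Suc n) i j) / dt = Bf (f (Suc n)) (g (Suc n)) i j"
    proof -
      have neg: "(f n i j - f (Suc n) i j) / dt = - ((f (Suc n) i j - f n i j) / dt)" by (simp add: diff_divide_distrib)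
      have a1: "- rho * chi1 j * M0 (g (Suc n) i) = - (rho * chi1 j * M0 (g (Suc n) i))" by simp
      have a2: "(1 / rho) * f (Suc n) i j = f (Suc n) i j / rho" by simp
      show ?thesis unfolding Bf_def using ef neg a1 a2 by linarith
    qed
    finally show ?thesis .
  qed
  show "g n i j = g (Suc n) i j + dt * Bg (f (Suc n)) (g (Suc n)) i j"
  proof -
    have "g n i j = g (Suc n) i j + dt * ((g n i j - g (Suc n) i j) / dt)" using dt by simp
    also have "(g n i j - g (Suc n) i j) / dt = Bg (f (Suc n)) (g (Suc n)) i j"
    proof -
      have neg: "(g n i j - g (Suc n) i j) / dt = - ((g (Suc n) i j - g n i j) / dt)" by (simp add: diff_divide_distrib)
      have a1: "- (1 / rho) * chi2 j * M0 (f (Suc n) i) = - (chi2 j * M0 (f (Suc n) i) / rho)" by simp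
      show ?thesis unfolding Bg_def using eg neg a1 by linarith
    qed
    finally show ?thesis .
  qed
qed

lemma mass_pres:
  assumes sch: "scheme N L dx dv dt lam rho chi1 chi2 f g" and dt: "dt > 0"
    and m0: "(\<Sum>i<N. \<Sum>j\<in>JJ. dx * dv * (f 0 i j - g 0 i j)) = 0"
  shows "avg (mm (f n) (g n)) = 0"
proof (induction n)
  case 0
  have pt: "(\<Sum>j\<in>JJ. dx * dv * (f 0 i j - g 0 i j)) = dx * mm (f 0) (g 0) i" for i
  proof -
    have "(\<Sum>j\<in>JJ. dx * dv * (f 0 i j - g 0 i j)) = (\<Sum>j\<in>JJ. dx * (dv * f 0 i j) - dx * (dv * g 0 i j))"
      by (intro sum.cong refl) (simp add: algebra_simps)
    also have "\<dots> = dx * M0 (f 0 i) - dx * M0 (g 0 i)"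
      by (simp only: sum_subtractf sum_distrib_left[symmetric] M0_def)
    finally show ?thesis by (simp add: mm_def right_diff_distrib)
  qed
  have "(\<Sum>i<N. \<Sum>j\<in>JJ. dx * dv * (f 0 i j - g 0 i j)) = dx * (\<Sum>i<N. mm (f 0) (g 0) i)"
    unfolding pt by (simp add: sum_distrib_left)
  then show ?case using m0 dx_pos by (simp add: avg_def)
next
  case (Suc n)
  have "mm (f n) (g n) i = mm (f (Suc n)) (g (Suc n)) i + dt * mm (Bf (f (Suc n)) (g (Suc n))) (Bg (f (Suc n)) (g (Suc n))) i"
    if i: "i < N" for i
  proof -
    have "M0 (f n i) = M0 (lc (f (Suc n)) dt (Bf (f (Suc n)) (g (Suc n))) i)"
      by (rule M0_cong) (simp add: lc_def upd(1)[OF sch dt i, where n=n])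
    moreover have "M0 (g n i) = M0 (lc (g (Suc n)) dt (Bg (f (Suc n)) (g (Suc n))) i)"
      by (rule M0_cong) (simp add: lc_def upd(2)[OF sch dt i, where n=n])
    ultimately have "mm (f n) (g n) i = mm (lc (f (Suc n)) dt (Bf (f (Suc n)) (g (Suc n)))) (lc (g (Suc n)) dt (Bg (f (Suc n)) (g (Suc n)))) i"
      unfolding mm_def by simp
    then show ?thesis unfolding mm_lc .
  qed
  then have "avg (mm (f n) (g n)) = avg (\<lambda>i. mm (f (Suc n)) (g (Suc n)) i + dt * mm (Bf (f (Suc n)) (g (Suc n))) (Bg (f (Suc n)) (g (Suc n))) i)"
    by (rule avg_cong)
  also have "\<dots> = avg (mm (f (Suc n)) (g (Suc n)))" unfolding avg_lin avg_mmB by simp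
  finally show ?case using Suc by simp
qed

lemma psirel_ex: "\<exists>\<psi>. psirel u \<psi>"
proof -
  have "(\<Sum>i<N. 2 * dx * (u i - avg u)) = 0"
    using N_pos by (simp add: sum_distrib_left[symmetric] sum_subtractf avg_def)
  from exists_anti[OF oddN this] obtain \<psi> where
    "\<forall>i<N. \<psi> (nxt N i) - \<psi> (prv N i) = 2 * dx * (u i - avg u)" "(\<Sum>i<N. \<psi> i) = 0" by blast
  then show ?thesis unfolding psirel_def by blast
qed

definition psiS :: "(nat \<Rightarrow> real) \<Rightarrow> nat \<Rightarrow> real" where "psiS u = (SOME \<psi>. psirel u \<psi>)"
lemma psiS: "psirel u (psiS u)" unfolding psiS_def using psirel_ex by (rule someI_ex)

lemma decay:
  assumes sch: "scheme N L dx dv dt lam rho chi1 chi2 f g" and dt: "dt > 0"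
    and m0: "(\<Sum>i<N. \<Sum>j\<in>JJ. dx * dv * (f 0 i j - g 0 i j)) = 0"
    and e0: "0 < e" and eH: "e \<le> epsH rho len Dm" and eK: "e \<le> epsK rho len vstar Dm" and e1: "e \<le> 1"
    and k0: "0 \<le> k" and k1: "k \<le> czero rho / (3 * cone rho)" and k2: "k \<le> e / 3"
  shows "nrm (f n) (g n) \<le> 3 * (1 / (1 + 2 * dt * k))^n * nrm (f 0) (g 0)"
proof -
  define H where "H n = Hq e (f n) (g n) (psiS (mm (f n) (g n)))" for n
  define r where "r = 1 / (1 + 2 * dt * k)"
  have pos: "1 + 2 * dt * k > 0" using dt k0 by (simp add: add_pos_nonneg)
  have r0: "r \<ge> 0" using pos by (simp add: r_def)
  have st: "(1 + 2 * dt * k) * H (Suc n) \<le> H n" for n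
    unfolding H_def
    by (rule step[OF upd(1)[OF sch dt] upd(2)[OF sch dt] dt psiS mass_pres[OF sch dt m0] psiS e0 eH eK e1 k0 k1 k2])
  have Hn: "H n \<le> r^n * H 0" for n
  proof (induction n)
    case 0 then show ?case by simp
  next
    case (Suc n)
    have "H (Suc n) \<le> r * H n" using st[of n] pos by (simp add: r_def field_simps)
    also have "\<dots> \<le> r * (r^n * H 0)" using Suc r0 by (rule mult_left_mono)
    finally show ?case by (simp add: mult_ac)
  qed
  have b1: "nrm (f n) (g n) \<le> 2 * H n"
    using Hpos[OF psiS less_imp_le[OF e0] eH, of "f n" "g n"] unfolding H_def by linarith
  have b2: "H 0 \<le> 3 / 2 * nrm (f 0) (g 0)"
    using Hpos[OF psiS less_imp_le[OF e0] eH, of "f 0" "g 0"] unfolding H_def by linarith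
  have "nrm (f n) (g n) \<le> 2 * (r^n * H 0)" using b1 Hn[of n] by linarith
  also have "\<dots> \<le> 2 * (r^n * (3 / 2 * nrm (f 0) (g 0)))" using b2 r0 by (intro mult_left_mono) auto
  finally show ?thesis by (simp add: r_def mult_ac)
qed

end


lemma exp_bound:
  fixes k kap dt dtmax :: real
  assumes k: "k > 0" and dt: "dt > 0" "dt \<le> dtmax" and kap: "kap = k / (1 + 2 * dtmax * k)"
  shows "1 / (1 + 2 * dt * k) \<le> exp (- (2 * kap * dt))"
proof -
  have dm: "dtmax > 0" using dt by linarith
  have p: "1 + 2 * dtmax * k > 0" using dm k by (simp add: add_pos_pos)
  have kp: "kap > 0" using k p kap by simp
  define x where "x = 2 * kap * dt"
  have x0: "x \<ge> 0" using kp dt by (simp add: x_def)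
  have kk: "kap * (1 + 2 * dt * k) \<le> k"
  proof -
    have "kap * (1 + 2 * dt * k) \<le> kap * (1 + 2 * dtmax * k)"
      using kp dt k by (intro mult_left_mono) auto
    also have "\<dots> = k" using p kap by simp
    finally show ?thesis .
  qed
  have "(1 - x) * (1 + 2 * dt * k) = 1 + 2 * dt * (k - kap * (1 + 2 * dt * k))"
    by (simp add: x_def algebra_simps)
  also have "\<dots> \<ge> 1" using kk dt by simp
  finally have prod: "(1 - x) * (1 + 2 * dt * k) \<ge> 1" .
  have ex: "exp (- x) \<ge> 1 - x" using exp_ge_add_one_self[of "- x"] by simp
  have pos: "1 + 2 * dt * k > 0" using dt k by (simp add: add_pos_pos)
  have "1 / (1 + 2 * dt * k) \<le> 1 - x"
    using prod pos by (simp add: divide_le_eq mult.commute)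
  also have "\<dots> \<le> exp (- x)" by (rule ex)
  finally show ?thesis by (simp add: x_def)
qed

lemma const_facts:
  fixes rho len vstar Dlo1 Dlo2 :: real
  assumes "rho > 0" "len > 0" "vstar > 0" "Dlo1 > 0" "Dlo2 > 0"
  defines "Dm \<equiv> Dmin Dlo1 Dlo2"
  shows "0 < epsC rho len vstar Dm" "epsC rho len vstar Dm \<le> 1"
    "epsC rho len vstar Dm \<le> epsH rho len Dm" "epsC rho len vstar Dm \<le> epsK rho len vstar Dm"
    "0 < kapC rho len vstar Dm" "kapC rho len vstar Dm \<le> czero rho / (3 * cone rho)"
    "kapC rho len vstar Dm \<le> epsC rho len vstar Dm / 3"
proof -
  have Dm: "Dm > 0" using assms by (simp add: Dm_def Dmin_def)
  have c1: "cone rho > 0" using assms by (simp add: cone_def add_pos_pos)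
  have c0: "czero rho > 0" using assms by (simp add: czero_def)
  have G: "Gam rho vstar Dm > 0" using Dm assms unfolding Gam_def
    by (intro add_pos_nonneg) (auto intro: divide_nonneg_pos)
  have eH: "epsH rho len Dm > 0" using c1 Dm unfolding epsH_def
    by (intro divide_pos_pos mult_pos_pos add_pos_nonneg) auto
  have eK: "epsK rho len vstar Dm > 0" using c0 G unfolding epsK_def
    by (intro divide_pos_pos mult_pos_pos add_pos_nonneg) auto
  show e0: "0 < epsC rho len vstar Dm" using eH eK by (simp add: epsC_def)
  show "epsC rho len vstar Dm \<le> 1" "epsC rho len vstar Dm \<le> epsH rho len Dm" "epsC rho len vstar Dm \<le> epsK rho len vstar Dm"
    by (auto simp: epsC_def)
  show "0 < kapC rho len vstar Dm" using e0 c0 c1 by (simp add: kapC_def)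
  show "kapC rho len vstar Dm \<le> czero rho / (3 * cone rho)" "kapC rho len vstar Dm \<le> epsC rho len vstar Dm / 3"
    by (auto simp: kapC_def)
qed

theorem theorem4p5:
  fixes len vstar lam rho dtmax Dlo1 Dhi1 Q1 Dlo2 Dhi2 Q2 :: real
  assumes "len > 0" and "vstar > 0" and "lam > 0" and "rho > 0" and "dtmax > 0"
    and "Dlo1 > 0" and "Dlo2 > 0"
  shows "\<exists>C \<kappa>. C \<ge> 1 \<and> \<kappa> > 0 \<and>
    (\<forall>(N::nat) (L::nat) dx dv dt chi1 chi2 f g.
       odd N \<longrightarrow> L \<ge> 1 \<longrightarrow>
       dx = len / real N \<longrightarrow> dv = vstar / real L \<longrightarrow>
       dt > 0 \<longrightarrow> dt \<le> dtmax \<longrightarrow> lam = dx / (2 * dt) \<longrightarrow>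
       chi_ok L dv Dlo1 Dhi1 Q1 chi1 \<longrightarrow> chi_ok L dv Dlo2 Dhi2 Q2 chi2 \<longrightarrow>
       (\<Sum>i<N. \<Sum>j\<in>Jset L. dx * dv * (f 0 i j - g 0 i j)) = 0 \<longrightarrow>
       scheme N L dx dv dt lam rho chi1 chi2 f g \<longrightarrow>
       (\<forall>n::nat. normD N L dx dv rho chi1 chi2 (f (Suc n)) (g (Suc n))
           \<le> C * normD N L dx dv rho chi1 chi2 (f 0) (g 0) * exp (- \<kappa> * (real n * dt))))"
proof -
  define Dm where "Dm = Dmin Dlo1 Dlo2"
  define e where "e = epsC rho len vstar Dm"
  define k where "k = kapC rho len vstar Dm"
  define kap where "kap = k / (1 + 2 * dtmax * k)"
  note cs = const_facts[OF assms(4,1,2,6,7), folded Dm_def, folded e_def k_def]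
  have k0: "k > 0" using cs by simp
  have kap0: "kap > 0" unfolding kap_def using k0 assms(5) by (simp add: add_pos_pos)
  show ?thesis
  proof (rule exI[of _ "2::real"], rule exI[of _ kap], intro conjI allI impI)
    show "(1::real) \<le> 2" by simp
    show "0 < kap" by (rule kap0)
  next
    fix N L :: nat and dx dv dt :: real and chi1 chi2 :: "int \<Rightarrow> real" and f g :: "nat \<Rightarrow> nat \<Rightarrow> int \<Rightarrow> real" and n :: nat
    assume oN: "odd N" and L1: "L \<ge> 1" and dxe: "dx = len / real N" and dve: "dv = vstar / real L"
      and dt0: "dt > 0" and dtm: "dt \<le> dtmax" and lame: "lam = dx / (2 * dt)"
      and c1: "chi_ok L dv Dlo1 Dhi1 Q1 chi1" and c2: "chi_ok L dv Dlo2 Dhi2 Q2 chi2"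
      and m0: "(\<Sum>i<N. \<Sum>j\<in>Jset L. dx * dv * (f 0 i j - g 0 i j)) = 0"
      and sch: "scheme N L dx dv dt lam rho chi1 chi2 f g"
    interpret S: setting N L dx dv lam rho len vstar Dlo1 Dlo2 Dhi1 Dhi2 Q1 Q2 chi1 chi2
      by unfold_locales (use assms oN L1 dxe dve c1 c2 in auto)
    have dec: "S.nrm (f (Suc n)) (g (Suc n)) \<le> 3 * (1 / (1 + 2 * dt * k))^(Suc n) * S.nrm (f 0) (g 0)"
      by (rule S.decay[OF sch dt0 m0]) (use cs in \<open>auto simp: Dm_def\<close>)
    have nD: "normD N L dx dv rho chi1 chi2 h1 h2 = sqrt (S.nrm h1 h2)" for h1 h2
      by (simp add: normD_def S.nrm_def)
    define r where "r = 1 / (1 + 2 * dt * k)"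
    have r0: "r \<ge> 0" "r \<le> 1" using dt0 k0 by (auto simp: r_def add_pos_pos)
    have rb: "r \<le> exp (- (2 * kap * dt))" unfolding r_def by (rule exp_bound[OF k0 dt0 dtm kap_def])
    have "r^(Suc n) \<le> r^n" using r0 by (simp add: mult_left_le_one_le)
    also have "\<dots> \<le> (exp (- (2 * kap * dt)))^n" using r0 rb by (intro power_mono) auto
    also have "\<dots> = (exp (- kap * (real n * dt)))^2"
      by (simp add: exp_of_nat_mult[symmetric] power2_eq_square exp_add[symmetric] algebra_simps)
    finally have rn: "r^(Suc n) \<le> (exp (- kap * (real n * dt)))^2" .
    have n0: "S.nrm (f 0) (g 0) \<ge> 0" by (rule S.nrm_nonneg)
    have "S.nrm (f (Suc n)) (g (Suc n)) \<le> 3 * r^(Suc n) * S.nrm (f 0) (g 0)" using dec by (simp add: r_def)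
    also have "\<dots> \<le> 4 * (exp (- kap * (real n * dt)))^2 * S.nrm (f 0) (g 0)"
      using rn n0 r0 by (intro mult_right_mono) (auto intro: mult_mono)
    also have "\<dots> = (2 * sqrt (S.nrm (f 0) (g 0)) * exp (- kap * (real n * dt)))^2"
      using n0 by (simp add: power_mult_distrib)
    finally have "sqrt (S.nrm (f (Suc n)) (g (Suc n))) \<le> sqrt ((2 * sqrt (S.nrm (f 0) (g 0)) * exp (- kap * (real n * dt)))^2)"
      by (rule real_sqrt_le_mono)
    also have "\<dots> = 2 * sqrt (S.nrm (f 0) (g 0)) * exp (- kap * (real n * dt))"
      by (rule real_sqrt_abs[THEN trans]) (simp add: abs_mult n0)
    finally show "normD N L dx dv rho chi1 chi2 (f (Suc n)) (g (Suc n))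
           \<le> 2 * normD N L dx dv rho chi1 chi2 (f 0) (g 0) * exp (- kap * (real n * dt))"
      unfolding nD .
  qed
qed


end
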